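(* Let $f$ satisfy $(\mathcal A)$, let $t_0>0$, $q>0$, $p\ge1$. Let $y:[t_0,+\infty[\to\mathcal H$ be continuously differentiable and $\lambda:[t_0,+\infty[\to\,]0,+\infty[$ continuous such that, with $\tau(t)=\frac{1}{q^q}\big(t_0+\int_{t_0}^t[\lambda(r)]^{1/q}dr\big)^q$, for all $t\ge t_0$: $$\dot y(t)+\dot\tau(t)\nabla f(y(t))=0,\qquad [\lambda(t)]^p\|\dot y(t)\|^{p-1}=1 .$$ Then, as $t\to+\infty$: (i) $f(y(t))-\inf_{\mathcal H}f=o\big(t^{-(1+q-\frac1p)}\big)$; (ii) $\|\nabla f(y(t))\|=o\big(t^{-(1+q-\frac1p)}\big)$; (iii) $\int_{t_0}^{+\infty}t^{1+\frac1q-\frac{1}{pq}}\|\dot y(t)\|^{2+\frac{p-1}{pq}}\,dt<+\infty$; (iv) $y(t)$ converges weakly as $t\to+\infty$ to an element of $S=\operatorname{argmin} f$.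
   Context: $\mathcal H$ is a real Hilbert space. Assumption $(\mathcal A)$: $f:\mathcal H\to\mathbb R$ is convex and continuously differentiable, $S=\operatorname{argmin}_{\mathcal H} f\neq\emptyset$, and $\nabla f$ is Lipschitz continuous on bounded subsets of $\mathcal H$. *)

theory Defs
  imports "HOL-Analysis.Analysis" "HOL-Library.Landau_Symbols"
begin

text \<open>Real power with the convention 0 to the 0 equals 1 (Isabelle's powr gives 0 powr 0 = 0).\<close>
definition rpow :: "real \<Rightarrow> real \<Rightarrow> real" where
  "rpow x a = (if a = 0 then 1 else x powr a)"

definition tau_fun :: "real \<Rightarrow> real \<Rightarrow> (real \<Rightarrow> real) \<Rightarrow> real \<Rightarrow> real" where
  "tau_fun t0 q lam t =
     (1 / q powr q) * (t0 + integral {t0..t} (\<lambda>r. lam r powr (1 / q))) powr q"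

definition weak_conv_at_top :: "(real \<Rightarrow> 'a::real_inner) \<Rightarrow> 'a \<Rightarrow> bool" where
  "weak_conv_at_top y x \<longleftrightarrow> (\<forall>v. ((\<lambda>t. y t \<bullet> v) \<longlongrightarrow> x \<bullet> v) at_top)"

end

theory Submission
  imports Defs
begin

lemma deriv_nonpos_mono:
  fixes F :: "real \<Rightarrow> real"
  assumes "a \<le> b"
    and "\<And>x. x \<in> {a..b} \<Longrightarrow> (F has_real_derivative F' x) (at x within {a..b})"
    and "\<And>x. x \<in> {a..b} \<Longrightarrow> F' x \<le> 0"
  shows "F b \<le> F a"
proof -
  have "(F' has_integral (F b - F a)) {a..b}"
    using assms(1,2) by (intro fundamental_theorem_of_calculus) (auto simp: has_real_derivative_iff_has_vector_derivative)
  then have "((\<lambda>x. - F' x) has_integral - (F b - F a)) {a..b}" by (rule has_integral_neg)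
  then have "0 \<le> - (F b - F a)" by (rule has_integral_nonneg) (use assms(3) in auto)
  then show ?thesis by simp
qed

lemma deriv_nonpos_mono':
  fixes F :: "real \<Rightarrow> real"
  assumes "t0 \<le> a" "a \<le> b"
    and "\<And>x. x \<ge> t0 \<Longrightarrow> (F has_real_derivative F' x) (at x within {t0..})"
    and "\<And>x. x \<in> {a..b} \<Longrightarrow> F' x \<le> 0"
  shows "F b \<le> F a"
proof (rule deriv_nonpos_mono[OF assms(2), where F'=F'])
  fix x assume x: "x \<in> {a..b}"
  show "(F has_real_derivative F' x) (at x within {a..b})"
    using has_field_derivative_subset[OF assms(3)[of x], of "{a..b}"] x assms(1) by auto
  show "F' x \<le> 0" using x assms(4) by auto
qed

lemma convex_tangent:
  fixes f :: "'a::real_inner \<Rightarrow> real"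
  assumes cv: "convex_on UNIV f" and d: "(f has_derivative (\<lambda>h. g \<bullet> h)) (at x)"
  shows "f x + g \<bullet> (z - x) \<le> f z"
proof -
  define \<phi> where "\<phi> s = f (x + s *\<^sub>R (z - x))" for s :: real
  have "convex_on UNIV \<phi>"
  proof (rule convex_onI)
    fix t u v :: real assume t: "0 < t" "t < 1"
    have "x + ((1 - t) * u + t * v) *\<^sub>R (z - x) = (1 - t) *\<^sub>R (x + u *\<^sub>R (z - x)) + t *\<^sub>R (x + v *\<^sub>R (z - x))"
      by (simp add: algebra_simps)
    then show "\<phi> ((1 - t) *\<^sub>R u + t *\<^sub>R v) \<le> (1 - t) * \<phi> u + t * \<phi> v"
      unfolding \<phi>_def using convex_onD[OF cv, of t] t by auto
  qed simp
  moreover have "(\<phi> has_real_derivative g \<bullet> (z - x)) (at 0 within UNIV)"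
  proof -
    have "((\<lambda>s. x + s *\<^sub>R (z - x)) has_derivative (\<lambda>s. s *\<^sub>R (z - x))) (at 0)"
      by (auto intro!: derivative_eq_intros)
    from has_derivative_compose[OF this, of f "\<lambda>h. g \<bullet> h"] d
    have "(\<phi> has_derivative (\<lambda>s. g \<bullet> (s *\<^sub>R (z - x)))) (at 0)"
      unfolding \<phi>_def by (simp add: o_def)
    moreover have "(\<lambda>s. g \<bullet> (s *\<^sub>R (z - x))) = (*) (g \<bullet> (z - x))" by (auto simp: fun_eq_iff)
    ultimately show ?thesis by (simp add: has_field_derivative_def)
  qed
  ultimately have "\<phi> 1 - \<phi> 0 \<ge> (g \<bullet> (z - x)) * (1 - 0)"
    by (intro convex_on_imp_above_tangent[where A=UNIV]) auto
  then show ?thesis unfolding \<phi>_def by simp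
qed

lemma parallelogram:
  fixes a b :: "'a::real_inner"
  shows "norm (a - b)^2 = 2 * norm a ^2 + 2 * norm b^2 - norm (a + b)^2"
  by (simp add: power2_norm_eq_inner inner_add inner_diff inner_commute)

lemma min_norm_exists:
  fixes K :: "'a::{real_inner,complete_space} set"
  assumes cl: "closed K" and cv: "convex K" and ne: "K \<noteq> {}"
  shows "\<exists>p\<in>K. \<forall>k\<in>K. norm p \<le> norm k"
proof -
  define d where "d = Inf (norm ` K)"
  have bdd: "bdd_below (norm ` K)" by (rule bdd_belowI[of _ 0]) auto
  have dle: "d \<le> norm k" if "k \<in> K" for k
    unfolding d_def using bdd that by (simp add: cInf_lower)
  have d0: "0 \<le> d" unfolding d_def using ne by (auto intro: cInf_greatest)
  have "\<exists>k\<in>K. norm k ^ 2 < d^2 + 1 / (Suc n)" for n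
  proof -
    have "d < sqrt (d^2 + 1 / Suc n)"
      using d0 by (simp add: real_less_rsqrt)
    then obtain k where k: "k \<in> K" "norm k < sqrt (d^2 + 1 / Suc n)"
      unfolding d_def using ne bdd by (auto simp: cInf_less_iff)
    then have "norm k ^ 2 < (sqrt (d^2 + 1 / Suc n))^2"
      by (intro power_strict_mono) auto
    also have "\<dots> = d^2 + 1 / Suc n" by (intro real_sqrt_pow2) auto
    finally have "norm k ^ 2 < d^2 + 1 / Suc n" .
    with k show ?thesis by blast
  qed
  then obtain k where kK: "\<And>n. k n \<in> K" and kn: "\<And>n. norm (k n) ^ 2 < d^2 + 1 / Suc n"
    by metis
  have key: "norm (k m - k n) ^ 2 \<le> 2 / Suc m + 2 / Suc n" for m n
  proof -
    have "(1/2) *\<^sub>R (k m + k n) \<in> K"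
      using convexD[OF cv kK[of m] kK[of n], of "1/2" "1/2"] by (simp add: scaleR_add_right)
    then have "d \<le> norm ((1/2) *\<^sub>R (k m + k n))" by (rule dle)
    then have "d^2 \<le> (norm (k m + k n) / 2)^2"
      using d0 by (simp add: power_mono)
    then have "4 * d^2 \<le> norm (k m + k n)^2" by (simp add: power_divide)
    then show ?thesis using parallelogram[of "k m" "k n"] kn[of m] kn[of n] by simp
  qed
  have "Cauchy k"
  proof (rule CauchyI)
    fix e :: real assume e: "0 < e"
    obtain M where M: "4 / e^2 < real M" using reals_Archimedean2 by blast
    have "norm (k m - k n) < e" if "m \<ge> M" "n \<ge> M" for m n
    proof -
      have "2 / real (Suc m) \<le> 2 / Suc M" "2 / real (Suc n) \<le> 2 / Suc M"
        using that by (simp_all add: frac_le)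
      moreover have "4 / Suc M < e^2"
      proof -
        have "4 < real M * e^2" using M e by (simp add: field_simps)
        moreover have "0 < e^2" using e by simp
        moreover have "real (Suc M) * e^2 = real M * e^2 + e^2" by (simp add: distrib_right)
        ultimately have "4 < real (Suc M) * e^2" by linarith
        then show ?thesis by (simp add: divide_less_eq mult.commute)
      qed
      moreover have "4 / real (Suc M) = 2 / Suc M + 2 / Suc M" by simp
      ultimately have "norm (k m - k n) ^ 2 < e ^ 2" using key[of m n] by linarith
      then show ?thesis by (rule power_less_imp_less_base) (use e in simp)
    qed
    then show "\<exists>M. \<forall>m\<ge>M. \<forall>n\<ge>M. norm (k m - k n) < e" by blast
  qed
  then obtain p where p: "k \<longlonglongrightarrow> p" using convergent_eq_Cauchy convergent_def by blast
  have pK: "p \<in> K" by (rule closed_sequentially[OF cl _ p]) (use kK in auto)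
  have le: "\<And>n. norm (k n)^2 \<le> d^2 + 1/Suc n" by (rule less_imp_le[OF kn])
  have "(\<lambda>n. norm (k n) ^ 2) \<longlonglongrightarrow> norm p ^ 2" using p by (intro tendsto_intros)
  moreover have "(\<lambda>n. d^2 + 1 / Suc n) \<longlonglongrightarrow> d^2 + 0"
    by (intro tendsto_intros LIMSEQ_inverse_real_of_nat[unfolded inverse_eq_divide])
  ultimately have "norm p ^ 2 \<le> d^2 + 0"
  proof (rule LIMSEQ_le)
    show "\<exists>N. \<forall>n\<ge>N. norm (k n) ^ 2 \<le> d^2 + 1/Suc n" using le by blast
  qed
  then have "norm p ^ 2 \<le> d ^ 2" by simp
  then have np: "norm p \<le> d" by (rule power2_le_imp_le) (use d0 in simp)
  show ?thesis
    by (intro bexI[OF _ pK] ballI order_trans[OF np dle])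
qed

lemma cluster_point:
  fixes z :: "nat \<Rightarrow> 'a::{real_inner,complete_space}"
  assumes bnd: "\<And>n. norm (z n) \<le> B"
  shows "\<exists>w. \<forall>C. closed C \<longrightarrow> convex C \<longrightarrow> (\<exists>N. \<forall>n\<ge>N. z n \<in> C) \<longrightarrow> w \<in> C"
proof -
  define K where "K n = closure (convex hull (z ` {n..}))" for n
  have Kcl: "closed (K n)" for n unfolding K_def by simp
  have Kcv: "convex (K n)" for n unfolding K_def by (simp add: convex_closure)
  have zK: "z m \<in> K n" if "n \<le> m" for m n
  proof -
    have "z m \<in> z ` {n..}" using that by auto
    then have "z m \<in> convex hull (z ` {n..})" by (rule hull_inc)
    then show ?thesis unfolding K_def using closure_subset by blast
  qed
  have Kmono: "K m \<subseteq> K n" if "n \<le> m" for m n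
    unfolding K_def by (intro closure_mono hull_mono image_mono) (use that in auto)
  have "\<forall>n. \<exists>p\<in>K n. \<forall>k\<in>K n. norm p \<le> norm k"
    using min_norm_exists[OF Kcl Kcv] zK by blast
  then obtain p where pK: "\<And>n. p n \<in> K n" and pmin: "\<And>n k. k \<in> K n \<Longrightarrow> norm (p n) \<le> norm k"
    by metis
  define d where "d n = norm (p n)^2" for n
  have dinc: "d n \<le> d m" if "n \<le> m" for n m
    unfolding d_def using pmin[of "p m" n] Kmono[OF that] pK[of m] by (auto intro: power_mono)
  have dB: "d n \<le> B^2" for n
  proof -
    have "norm (p n) \<le> B" using pmin[OF zK[of n n]] bnd[of n] by simp
    then show ?thesis unfolding d_def by (intro power_mono) auto
  qed
  have "incseq d" using dinc by (simp add: incseq_def)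
  moreover have "bdd_above (range d)" by (rule bdd_aboveI[of _ "B^2"]) (use dB in auto)
  ultimately have "d \<longlonglongrightarrow> (SUP i. d i)" by (rule LIMSEQ_incseq_SUP[rotated])
  then have "Cauchy d" by (rule LIMSEQ_imp_Cauchy)
  have key: "norm (p n - p m)^2 \<le> 2 * (d m - d n)" if "n \<le> m" for n m
  proof -
    have "(1/2) *\<^sub>R (p n + p m) \<in> K n"
      using convexD[OF Kcv pK[of n] subsetD[OF Kmono[OF that] pK[of m]], of "1/2" "1/2"]
      by (simp add: scaleR_add_right)
    then have "norm (p n) \<le> norm ((1/2) *\<^sub>R (p n + p m))" by (rule pmin)
    then have "norm (p n)^2 \<le> (norm (p n + p m) / 2)^2"
      by (intro power_mono) auto
    then have "4 * norm (p n)^2 \<le> norm (p n + p m)^2" by (simp add: power_divide)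
    then show ?thesis using parallelogram[of "p n" "p m"] unfolding d_def by simp
  qed
  have "Cauchy p"
  proof (rule CauchyI)
    fix e :: real assume e: "0 < e"
    from \<open>Cauchy d\<close> obtain M where M: "\<And>m n. m \<ge> M \<Longrightarrow> n \<ge> M \<Longrightarrow> dist (d m) (d n) < e^2 / 2"
      unfolding Cauchy_def using e by (metis half_gt_zero zero_less_power)
    have "norm (p m - p n) < e" if "m \<ge> M" "n \<ge> M" for m n
    proof -
      have "norm (p m - p n)^2 < e^2"
      proof (cases "n \<le> m")
        case True
        then have "norm (p n - p m)^2 \<le> 2 * (d m - d n)" by (rule key)
        moreover have "dist (d m) (d n) < e^2/2" using M that by blast
        then have "d m - d n < e^2/2" using abs_ge_self[of "d m - d n"] unfolding dist_real_def by linarith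
        ultimately show ?thesis by (simp add: norm_minus_commute)
      next
        case False
        then have "norm (p m - p n)^2 \<le> 2 * (d n - d m)" by (intro key) simp
        moreover have "dist (d m) (d n) < e^2/2" using M that by blast
        then have "d n - d m < e^2/2" using abs_ge_minus_self[of "d m - d n"] unfolding dist_real_def by linarith
        ultimately show ?thesis by simp
      qed
      then show ?thesis by (rule power_less_imp_less_base) (use e in simp)
    qed
    then show "\<exists>M. \<forall>m\<ge>M. \<forall>n\<ge>M. norm (p m - p n) < e" by blast
  qed
  then obtain w where w: "p \<longlonglongrightarrow> w" using convergent_eq_Cauchy convergent_def by blast
  have wK: "w \<in> K n" for n
  proof (rule Lim_in_closed_set[OF Kcl _ _ w])
    show "\<forall>\<^sub>F m in sequentially. p m \<in> K n"
      unfolding eventually_sequentially using pK Kmono by blast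
  qed simp
  show ?thesis
  proof (intro exI allI impI)
    fix C :: "'a set" assume C: "closed C" "convex C" "\<exists>N. \<forall>n\<ge>N. z n \<in> C"
    then obtain N where N: "\<And>n. n \<ge> N \<Longrightarrow> z n \<in> C" by blast
    have "z ` {N..} \<subseteq> C" using N by auto
    then have "convex hull (z ` {N..}) \<subseteq> C" using C(2) by (rule hull_minimal)
    then have "K N \<subseteq> C" unfolding K_def using C(1) by (rule closure_minimal)
    then show "w \<in> C" using wK by blast
  qed
qed

lemma real_deriv_of_has_derivative:
  "(F has_derivative (\<lambda>h. h * D)) net \<Longrightarrow> (F has_real_derivative D) net"
  unfolding has_field_derivative_def by (erule has_derivative_eq_rhs) (auto simp: fun_eq_iff mult.commute)

lemma at_Ici_not_bot: "(t::real) \<ge> t0 \<Longrightarrow> at t within {t0..} \<noteq> bot"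
proof -
  assume t: "t \<ge> t0"
  have "{t<..} \<subseteq> {t0..} - {t}" using t by auto
  then have "closure {t<..} \<subseteq> closure ({t0..} - {t})" by (rule closure_mono)
  moreover have "t \<in> closure {t<..}" by simp
  ultimately show ?thesis by (auto simp: at_within_eq_bot_iff)
qed

lemma at_Ici_eq: "(t::real) \<ge> t0 \<Longrightarrow> at t within {t0..} = at t within {t0..t+1}"
  by (rule at_within_nhd[where S="{t - 1 <..< t + 1}"]) auto

locale dyn =
  fixes f :: "'a::{real_inner, complete_space} \<Rightarrow> real"
    and gradf :: "'a \<Rightarrow> 'a"
    and y y' :: "real \<Rightarrow> 'a"
    and lam :: "real \<Rightarrow> real"
    and t0 q p :: real
  assumes f_convex: "convex_on UNIV f"
    and f_grad: "\<And>x. (f has_derivative (\<lambda>h. gradf x \<bullet> h)) (at x)"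
    and grad_cont: "continuous_on UNIV gradf"
    and S_nonempty: "{x. \<forall>z. f x \<le> f z} \<noteq> {}"
    and grad_lip: "\<And>B. bounded B \<Longrightarrow> \<exists>L. L-lipschitz_on B gradf"
    and t0_pos: "t0 > 0" and q_pos: "q > 0" and p_ge: "p \<ge> 1"
    and y_deriv: "\<And>t. t \<ge> t0 \<Longrightarrow> (y has_vector_derivative y' t) (at t within {t0..})"
    and y'_cont: "continuous_on {t0..} y'"
    and lam_cont: "continuous_on {t0..} lam"
    and lam_pos: "\<And>t. t \<ge> t0 \<Longrightarrow> lam t > 0"
    and ode: "\<And>t. t \<ge> t0 \<Longrightarrow>
       y' t + vector_derivative (tau_fun t0 q lam) (at t within {t0..}) *\<^sub>R gradf (y t) = 0"
    and closed_loop: "\<And>t. t \<ge> t0 \<Longrightarrow> lam t powr p * rpow (norm (y' t)) (p - 1) = 1"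
begin

lemma tangent: "f x + gradf x \<bullet> (z - x) \<le> f z"
  by (rule convex_tangent[OF f_convex f_grad])

lemma grad_mono: "0 \<le> (gradf x - gradf z) \<bullet> (x - z)"
proof -
  have "f x + gradf x \<bullet> (z - x) \<le> f z" "f z + gradf z \<bullet> (x - z) \<le> f x" by (rule tangent)+
  moreover have "gradf x \<bullet> (z - x) = - (gradf x \<bullet> (x - z))" by (simp add: inner_diff_right)
  ultimately show ?thesis by (simp add: inner_diff_left)
qed

lemma f_cont: "continuous_on UNIV f"
  using has_derivative_continuous[OF f_grad] by (simp add: continuous_on_eq_continuous_within)

definition xs where "xs = (SOME x. \<forall>z. f x \<le> f z)"

lemma xs_min: "f xs \<le> f z"
  using someI_ex[of "\<lambda>x. \<forall>z. f x \<le> f z"] S_nonempty unfolding xs_def by auto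

lemma fstar: "(INF x. f x) = f xs"
proof (rule antisym)
  have "bdd_below (range f)" by (rule bdd_belowI[of _ "f xs"]) (auto simp: xs_min)
  then show "(INF x. f x) \<le> f xs" by (rule cINF_lower) simp
  show "f xs \<le> (INF x. f x)" by (rule cINF_greatest) (auto simp: xs_min)
qed

definition Lam where "Lam t = t0 + integral {t0..t} (\<lambda>r. lam r powr (1/q))"
definition aa where "aa t = (1 / q powr q) * (q * Lam t powr (q - 1)) * lam t powr (1/q)"
abbreviation u where "u t \<equiv> gradf (y t)"

lemma lq_cont: "continuous_on {t0..} (\<lambda>r. lam r powr (1/q))"
  by (intro continuous_intros lam_cont) (use lam_pos in force)

lemma Lam_deriv: "t \<ge> t0 \<Longrightarrow> (Lam has_real_derivative lam t powr (1/q)) (at t within {t0..})"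
proof -
  assume t: "t \<ge> t0"
  have "continuous_on {t0..t+1} (\<lambda>r. lam r powr (1/q))"
    by (rule continuous_on_subset[OF lq_cont]) auto
  from integral_has_real_derivative[OF this, of t] t
  have "((\<lambda>x. integral {t0..x} (\<lambda>r. lam r powr (1/q))) has_real_derivative lam t powr (1/q)) (at t within {t0..})"
    by (simp add: at_Ici_eq[OF t])
  then have "((\<lambda>x. t0 + integral {t0..x} (\<lambda>r. lam r powr (1/q))) has_real_derivative 0 + lam t powr (1/q)) (at t within {t0..})"
    by (intro DERIV_add) auto
  then show ?thesis unfolding Lam_def[abs_def] by simp
qed

lemma Lam_ge: "t \<ge> t0 \<Longrightarrow> t0 \<le> Lam t"
proof -
  assume t: "t \<ge> t0"
  have "continuous_on {t0..t} (\<lambda>r. lam r powr (1/q))"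
    by (rule continuous_on_subset[OF lq_cont]) auto
  then have "(\<lambda>r. lam r powr (1/q)) integrable_on {t0..t}" by (rule integrable_continuous_real)
  then have "0 \<le> integral {t0..t} (\<lambda>r. lam r powr (1/q))" by (rule integral_nonneg) auto
  then show ?thesis unfolding Lam_def by simp
qed

lemma Lam_pos: "t \<ge> t0 \<Longrightarrow> 0 < Lam t"
  using Lam_ge t0_pos by force

lemma tau_Lam: "tau_fun t0 q lam t = (1 / q powr q) * Lam t powr q"
  by (simp add: tau_fun_def Lam_def)

lemma tau_deriv: "t \<ge> t0 \<Longrightarrow> (tau_fun t0 q lam has_real_derivative aa t) (at t within {t0..})"
proof -
  assume t: "t \<ge> t0"
  have "((\<lambda>x. Lam x powr q) has_real_derivative (q * Lam t powr (q - 1)) * lam t powr (1/q)) (at t within {t0..})"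
    by (rule DERIV_chain'[OF Lam_deriv[OF t] has_real_derivative_powr[OF Lam_pos[OF t]]])
  then have "((\<lambda>x. (1 / q powr q) * Lam x powr q) has_real_derivative (1 / q powr q) * ((q * Lam t powr (q - 1)) * lam t powr (1/q))) (at t within {t0..})"
    by (rule DERIV_cmult)
  then show ?thesis unfolding aa_def by (simp add: tau_Lam[abs_def] mult.assoc)
qed

lemma aa_pos: "t \<ge> t0 \<Longrightarrow> 0 < aa t"
  unfolding aa_def using Lam_pos[of t] lam_pos[of t] q_pos by simp

lemma vd_tau: "t \<ge> t0 \<Longrightarrow> vector_derivative (tau_fun t0 q lam) (at t within {t0..}) = aa t"
  by (rule vector_derivative_within[OF at_Ici_not_bot])
     (auto simp: has_real_derivative_iff_has_vector_derivative[symmetric] intro: tau_deriv)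

lemma y'_eq: "t \<ge> t0 \<Longrightarrow> y' t = - aa t *\<^sub>R u t"
  using ode[of t] vd_tau[of t] by (simp add: add_eq_0_iff)

lemma y_cont: "continuous_on {t0..} y"
  unfolding continuous_on_eq_continuous_within by (auto intro: has_vector_derivative_continuous[OF y_deriv])

lemma u_cont: "continuous_on {t0..} u"
  by (rule continuous_on_compose2[OF grad_cont y_cont]) auto

lemma Lam_cont: "continuous_on {t0..} Lam"
  unfolding continuous_on_eq_continuous_within by (auto intro: DERIV_continuous[OF Lam_deriv])

lemma aa_cont: "continuous_on {t0..} aa"
  unfolding aa_def
  by (intro continuous_intros lam_cont Lam_cont) (use lam_pos Lam_pos in force)+

lemma tau_cont: "continuous_on {t0..} (tau_fun t0 q lam)"
  unfolding continuous_on_eq_continuous_within by (auto intro: DERIV_continuous[OF tau_deriv])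

lemma E_deriv: "t \<ge> t0 \<Longrightarrow> ((\<lambda>t. f (y t)) has_real_derivative (- aa t * norm (u t)^2)) (at t within {t0..})"
proof -
  assume t: "t \<ge> t0"
  have "((\<lambda>t. f (y t)) has_derivative (\<lambda>h. gradf (y t) \<bullet> (h *\<^sub>R y' t))) (at t within {t0..})"
    using has_derivative_compose[OF y_deriv[OF t, unfolded has_vector_derivative_def] f_grad] .
  then show ?thesis
    by (intro real_deriv_of_has_derivative, elim has_derivative_eq_rhs)
       (auto simp: fun_eq_iff y'_eq[OF t] power2_norm_eq_inner)
qed

lemma h_deriv: "t \<ge> t0 \<Longrightarrow> ((\<lambda>t. norm (y t - x)^2) has_real_derivative (- 2 * aa t * ((y t - x) \<bullet> u t))) (at t within {t0..})"
proof -
  assume t: "t \<ge> t0"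
  have d: "((\<lambda>t. y t - x) has_derivative (\<lambda>h. h *\<^sub>R y' t)) (at t within {t0..})"
    using y_deriv[OF t, unfolded has_vector_derivative_def] by (auto intro!: derivative_eq_intros)
  have "((\<lambda>t. (y t - x) \<bullet> (y t - x)) has_derivative (\<lambda>h. (y t - x) \<bullet> (h *\<^sub>R y' t) + (h *\<^sub>R y' t) \<bullet> (y t - x))) (at t within {t0..})"
    by (rule has_derivative_inner[OF d d])
  then show ?thesis
    by (intro real_deriv_of_has_derivative, simp only: power2_norm_eq_inner, elim has_derivative_eq_rhs)
       (auto simp: fun_eq_iff y'_eq[OF t] inner_commute algebra_simps)
qed

end

lemma dec_conv:
  fixes g :: "real \<Rightarrow> real"
  assumes dec: "\<And>s t. t0 \<le> s \<Longrightarrow> s \<le> t \<Longrightarrow> g t \<le> g s" and nn: "\<And>t. t0 \<le> t \<Longrightarrow> 0 \<le> g t"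
  shows "\<exists>L. (g \<longlongrightarrow> L) at_top \<and> (\<forall>t\<ge>t0. L \<le> g t)"
proof -
  define L where "L = Inf (g ` {t0..})"
  have bdd: "bdd_below (g ` {t0..})" by (rule bdd_belowI[of _ 0]) (use nn in auto)
  have Lle: "\<forall>t\<ge>t0. L \<le> g t" unfolding L_def using bdd by (auto intro: cInf_lower)
  have "(g \<longlongrightarrow> L) at_top"
  proof (rule order_tendstoI)
    fix a assume "a < L"
    then show "\<forall>\<^sub>F x in at_top. a < g x"
      unfolding eventually_at_top_linorder using Lle by (metis less_le_trans)
  next
    fix a assume "L < a"
    then obtain s where s: "s \<ge> t0" "g s < a"
      unfolding L_def using bdd by (auto simp: cInf_less_iff)
    then show "\<forall>\<^sub>F x in at_top. g x < a"
      unfolding eventually_at_top_linorder by (metis dec le_less_trans)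
  qed
  with Lle show ?thesis by blast
qed

context dyn begin

definition E where "E t = f (y t) - f xs"
definition tau where "tau t = tau_fun t0 q lam t"
definition hh where "hh t = norm (y t - xs)^2"
definition V where "V t = tau t * E t + hh t / 2"

lemma E_nonneg: "0 \<le> E t" unfolding E_def using xs_min by simp

lemma E_deriv': "t \<ge> t0 \<Longrightarrow> (E has_real_derivative (- aa t * norm (u t)^2)) (at t within {t0..})"
proof -
  assume t: "t \<ge> t0"
  have "((\<lambda>t. f (y t) - f xs) has_real_derivative (- aa t * norm (u t)^2) - 0) (at t within {t0..})"
    by (intro DERIV_diff E_deriv[OF t] DERIV_const)
  then show ?thesis unfolding E_def[abs_def] by simp
qed

lemma tau_deriv': "t \<ge> t0 \<Longrightarrow> (tau has_real_derivative aa t) (at t within {t0..})"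
  unfolding tau_def[abs_def] by (rule tau_deriv)

lemma hh_deriv: "t \<ge> t0 \<Longrightarrow> (hh has_real_derivative (- 2 * aa t * ((y t - xs) \<bullet> u t))) (at t within {t0..})"
  unfolding hh_def[abs_def] by (rule h_deriv)

lemma inner_ge: "\<forall>z. f x \<le> f z \<Longrightarrow> f (y t) - f x \<le> (y t - x) \<bullet> u t"
proof -
  assume "\<forall>z. f x \<le> f z"
  have "f (y t) + u t \<bullet> (x - y t) \<le> f x" by (rule tangent)
  moreover have "u t \<bullet> (x - y t) = - ((y t - x) \<bullet> u t)" by (simp add: inner_commute inner_diff)
  ultimately show ?thesis by simp
qed

lemma inner_ge_E: "E t \<le> (y t - xs) \<bullet> u t"
  unfolding E_def using inner_ge xs_min by blast

lemma E_mono: "t0 \<le> s \<Longrightarrow> s \<le> t \<Longrightarrow> E t \<le> E s"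
proof (rule deriv_nonpos_mono'[OF _ _ E_deriv'])
  fix r assume "t0 \<le> s" "r \<in> {s..t}"
  then show "- aa r * norm (u r)^2 \<le> 0" using aa_pos[of r] by simp
qed

lemma h_mono:
  assumes x: "\<forall>z. f x \<le> f z" and st: "t0 \<le> s" "s \<le> t"
  shows "norm (y t - x)^2 \<le> norm (y s - x)^2"
proof (rule deriv_nonpos_mono'[OF st h_deriv])
  fix r assume r: "r \<in> {s..t}"
  have "0 \<le> f (y r) - f x" using x by simp
  also have "\<dots> \<le> (y r - x) \<bullet> u r" by (rule inner_ge[OF x])
  finally show "- 2 * aa r * ((y r - x) \<bullet> u r) \<le> 0"
    using aa_pos[of r] r st by (simp add: mult_nonneg_nonneg)
qed

lemma tau_mono: "t0 \<le> s \<Longrightarrow> s \<le> t \<Longrightarrow> tau s \<le> tau t"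
proof -
  assume st: "t0 \<le> s" "s \<le> t"
  have "(\<lambda>r. - tau r) t \<le> (\<lambda>r. - tau r) s"
  proof (rule deriv_nonpos_mono'[OF st, where F'="\<lambda>r. - aa r"])
    fix r assume "t0 \<le> r"
    then show "((\<lambda>r. - tau r) has_real_derivative - aa r) (at r within {t0..})"
      by (intro DERIV_minus tau_deriv')
  next
    fix r assume "r \<in> {s..t}"
    then show "- aa r \<le> 0" using aa_pos[of r] st by simp
  qed
  then show ?thesis by simp
qed

lemma tau_pos: "t \<ge> t0 \<Longrightarrow> 0 < tau t"
proof -
  assume t: "t \<ge> t0"
  have "0 < Lam t powr q" using Lam_pos[OF t] by simp
  then show ?thesis unfolding tau_def tau_Lam using q_pos by simp
qed

lemma V_deriv: "t \<ge> t0 \<Longrightarrow> (V has_real_derivative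
    (aa t * E t + (- aa t * norm (u t)^2) * tau t + (- 2 * aa t * ((y t - xs) \<bullet> u t)) / 2)) (at t within {t0..})"
  unfolding V_def[abs_def]
  by (intro DERIV_add DERIV_mult DERIV_cdivide tau_deriv' E_deriv' hh_deriv)

lemma V_deriv_le: "t \<ge> t0 \<Longrightarrow>
    aa t * E t + (- aa t * norm (u t)^2) * tau t + (- 2 * aa t * ((y t - xs) \<bullet> u t)) / 2 \<le> - aa t * tau t * norm (u t)^2"
proof -
  assume t: "t \<ge> t0"
  have m: "aa t * E t \<le> aa t * ((y t - xs) \<bullet> u t)"
    by (rule mult_left_mono[OF inner_ge_E]) (use aa_pos[OF t] in simp)
  have e1: "(- 2 * aa t * ((y t - xs) \<bullet> u t)) / 2 = - (aa t * ((y t - xs) \<bullet> u t))" by simp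
  have e2: "(- aa t * norm (u t)^2) * tau t = - (aa t * tau t * norm (u t)^2)" by simp
  show ?thesis unfolding e1 e2 using m by linarith
qed

lemma V_nonneg: "t \<ge> t0 \<Longrightarrow> 0 \<le> V t"
  unfolding V_def hh_def using tau_pos[of t] E_nonneg[of t] by simp

lemma V_mono: "t0 \<le> s \<Longrightarrow> s \<le> t \<Longrightarrow> V t \<le> V s"
proof (rule deriv_nonpos_mono'[OF _ _ V_deriv])
  fix r assume "t0 \<le> s" "r \<in> {s..t}"
  then have r: "t0 \<le> r" by simp
  have "0 \<le> aa r * tau r * norm (u r)^2" using aa_pos[OF r] tau_pos[OF r] by simp
  then show "aa r * E r + (- aa r * norm (u r)^2) * tau r + (- 2 * aa r * ((y r - xs) \<bullet> u r)) / 2 \<le> 0"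
    using V_deriv_le[OF r] by linarith
qed

lemma Phi_mono:
  assumes st: "t0 \<le> s" "s \<le> t"
  shows "(tau t - tau s) * E t + hh t / 2 \<le> hh s / 2"
proof -
  have "(\<lambda>r. (tau r - tau s) * E r + hh r / 2) t \<le> (\<lambda>r. (tau r - tau s) * E r + hh r / 2) s"
  proof (rule deriv_nonpos_mono'[OF st])
    fix r assume r: "t0 \<le> r"
    show "((\<lambda>r. (tau r - tau s) * E r + hh r / 2) has_real_derivative
       (aa r - 0) * E r + (- aa r * norm (u r)^2) * (tau r - tau s) + (- 2 * aa r * ((y r - xs) \<bullet> u r)) / 2) (at r within {t0..})"
      by (intro DERIV_add DERIV_mult DERIV_cdivide DERIV_diff tau_deriv' E_deriv' hh_deriv DERIV_const r)
  next
    fix r assume r: "r \<in> {s..t}"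
    then have r0: "t0 \<le> r" using st by simp
    have "tau s \<le> tau r" using tau_mono st r by simp
    then have "0 \<le> aa r * norm (u r)^2 * (tau r - tau s)" using aa_pos[OF r0] by simp
    moreover have "aa r * E r \<le> aa r * ((y r - xs) \<bullet> u r)"
      using inner_ge_E[of r] aa_pos[OF r0] by (simp add: mult_left_mono)
    moreover have e1: "(- 2 * aa r * ((y r - xs) \<bullet> u r)) / 2 = - (aa r * ((y r - xs) \<bullet> u r))" by simp
    moreover have e2: "(- aa r * norm (u r)^2) * (tau r - tau s) = - (aa r * norm (u r)^2 * (tau r - tau s))" by simp
    ultimately show "(aa r - 0) * E r + (- aa r * norm (u r)^2) * (tau r - tau s) + (- 2 * aa r * ((y r - xs) \<bullet> u r)) / 2 \<le> 0"
      unfolding diff_zero by linarith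
  qed
  then show ?thesis by simp
qed

end

context dyn begin

lemma y_int:
  assumes "t0 \<le> r" "r \<le> r'"
  shows "((\<lambda>\<rho>. v \<bullet> y' \<rho>) has_integral (v \<bullet> y r' - v \<bullet> y r)) {r..r'}"
proof (rule fundamental_theorem_of_calculus[OF assms(2)])
  fix x assume x: "x \<in> {r..r'}"
  then have x0: "t0 \<le> x" using assms by simp
  have "(y has_vector_derivative y' x) (at x within {r..r'})"
    by (rule has_vector_derivative_within_subset[OF y_deriv[OF x0]]) (use assms in auto)
  then have "((\<lambda>\<rho>. v \<bullet> y \<rho>) has_derivative (\<lambda>h. v \<bullet> (h *\<^sub>R y' x))) (at x within {r..r'})"
    unfolding has_vector_derivative_def by (rule has_derivative_inner_right)
  then show "((\<lambda>\<rho>. v \<bullet> y \<rho>) has_vector_derivative v \<bullet> y' x) (at x within {r..r'})"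
    unfolding has_vector_derivative_def by (elim has_derivative_eq_rhs) (auto simp: fun_eq_iff)
qed

lemma y_G1:
  assumes "t0 \<le> r" "r \<le> r'" and eta: "\<And>\<rho>. \<rho> \<in> {r..r'} \<Longrightarrow> norm (y' \<rho> - y' r') \<le> \<eta>" "0 \<le> \<eta>"
  shows "\<bar>v \<bullet> (y r' - y r) - (r' - r) * (v \<bullet> y' r')\<bar> \<le> norm v * \<eta> * (r' - r)"
proof -
  have "((\<lambda>\<rho>. v \<bullet> y' \<rho> - v \<bullet> y' r') has_integral ((v \<bullet> y r' - v \<bullet> y r) - Henstock_Kurzweil_Integration.content {r..r'} *\<^sub>R (v \<bullet> y' r'))) {r..r'}"
    by (intro has_integral_diff y_int assms has_integral_const_real)
  then have I: "((\<lambda>\<rho>. v \<bullet> y' \<rho> - v \<bullet> y' r') has_integral (v \<bullet> (y r' - y r) - (r' - r) * (v \<bullet> y' r'))) (cbox r r')"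
    using assms(2) by (simp add: inner_diff_right)
  have "norm (v \<bullet> (y r' - y r) - (r' - r) * (v \<bullet> y' r')) \<le> (norm v * \<eta>) * Henstock_Kurzweil_Integration.content (cbox r r')"
  proof (rule has_integral_bound[OF _ I])
    show "0 \<le> norm v * \<eta>" using eta by simp
    fix x assume "x \<in> cbox r r'"
    then have x: "x \<in> {r..r'}" by simp
    have "norm (v \<bullet> y' x - v \<bullet> y' r') = \<bar>v \<bullet> (y' x - y' r')\<bar>" by (simp add: inner_diff_right)
    also have "\<dots> \<le> norm v * norm (y' x - y' r')" by (rule Cauchy_Schwarz_ineq2)
    also have "\<dots> \<le> norm v * \<eta>" by (rule mult_left_mono[OF eta(1)[OF x]]) simp
    finally show "norm (v \<bullet> y' x - v \<bullet> y' r') \<le> norm v * \<eta>" .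
  qed
  then show ?thesis using assms(2) by simp
qed

lemma y_G2:
  assumes "t0 \<le> r" "r \<le> r'" and M: "\<And>\<rho>. \<rho> \<in> {r..r'} \<Longrightarrow> norm (y' \<rho>) \<le> M"
  shows "norm (y r' - y r) \<le> M * (r' - r)"
proof -
  define v where "v = y r' - y r"
  have I: "((\<lambda>\<rho>. v \<bullet> y' \<rho>) has_integral (v \<bullet> v)) (cbox r r')"
    using y_int[OF assms(1,2), of v] by (simp add: v_def inner_diff_right)
  have M0: "0 \<le> M" using M[of r] assms(2) by (meson atLeastAtMost_iff norm_ge_zero order_refl order_trans)
  have "norm (v \<bullet> v) \<le> (norm v * M) * Henstock_Kurzweil_Integration.content (cbox r r')"
  proof (rule has_integral_bound[OF _ I])
    show "0 \<le> norm v * M" using M0 by simp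
    fix x assume "x \<in> cbox r r'"
    then have x: "x \<in> {r..r'}" by simp
    have "norm (v \<bullet> y' x) \<le> norm v * norm (y' x)" using Cauchy_Schwarz_ineq2 by simp
    also have "\<dots> \<le> norm v * M" by (rule mult_left_mono[OF M[OF x]]) simp
    finally show "norm (v \<bullet> y' x) \<le> norm v * M" .
  qed
  then have "norm v * norm v \<le> norm v * (M * (r' - r))"
    using assms(2) by (simp add: power2_norm_eq_inner[symmetric] power2_eq_square mult.assoc)
  then show ?thesis unfolding v_def[symmetric]
    by (cases "norm v = 0") (use M0 assms(2) in auto)
qed

end

context dyn begin

lemma u_step:
  assumes r: "t0 \<le> r" "r < r'"
    and eta: "\<And>\<rho>. \<rho> \<in> {r..r'} \<Longrightarrow> norm (y' \<rho> - y' r') \<le> \<eta>" "0 \<le> \<eta>"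
    and M: "\<And>\<rho>. \<rho> \<in> {r..r'} \<Longrightarrow> norm (y' \<rho>) \<le> M"
    and L: "L-lipschitz_on B gradf" "y r \<in> B" "y r' \<in> B"
    and amin: "0 < amin" "amin \<le> aa r'"
  shows "norm (u r')^2 - norm (u r)^2 \<le> 2 * L * M * \<eta> * (r' - r) / amin"
proof -
  define h where "h = r' - r"
  define w where "w = u r' - u r"
  define dy where "dy = y r' - y r"
  have h0: "0 < h" using r unfolding h_def by simp
  have M0: "0 \<le> M" using M[of r] r by (meson atLeastAtMost_iff less_imp_le norm_ge_zero order_refl order_trans)
  have L0: "0 \<le> L" using L(1) by (rule lipschitz_on_nonneg)
  have G1: "\<bar>w \<bullet> dy - h * (w \<bullet> y' r')\<bar> \<le> norm w * \<eta> * h"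
    unfolding dy_def h_def by (rule y_G1) (use r eta in auto)
  have G2: "norm dy \<le> M * h"
    unfolding dy_def h_def by (rule y_G2) (use r M in auto)
  have Lw: "norm w \<le> L * norm dy"
    using lipschitz_onD[OF L(1) L(3) L(2)] unfolding w_def dy_def by (simp add: dist_norm)
  have A: "0 \<le> w \<bullet> dy" unfolding w_def dy_def using grad_mono[of "y r'" "y r"] .
  have B: "w \<bullet> dy \<le> h * (w \<bullet> y' r') + norm w * \<eta> * h" using G1 abs_ge_self[of "w \<bullet> dy - h * (w \<bullet> y' r')"] by linarith
  define P where "P = aa r' * (w \<bullet> u r')"
  have C: "h * (w \<bullet> y' r') = - (h * P)" unfolding P_def using y'_eq[of r'] r by simp
  have hP: "h * P \<le> norm w * \<eta> * h" using A B C by linarith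
  have D: "norm w \<le> L * (M * h)" using Lw mult_left_mono[OF G2 L0] by linarith
  have "norm w * \<eta> * h \<le> (L * (M * h)) * \<eta> * h"
    by (intro mult_right_mono D eta(2)) (use h0 in simp)
  then have "h * P \<le> h * (L * M * \<eta> * h)" using hP by (simp add: algebra_simps)
  then have Pb: "P \<le> L * M * \<eta> * h" using h0 by simp
  have R0: "0 \<le> L * M * \<eta> * h / amin" using L0 M0 eta(2) h0 amin(1) by simp
  have wu: "w \<bullet> u r' \<le> L * M * \<eta> * h / amin"
  proof (cases "w \<bullet> u r' \<le> 0")
    case True then show ?thesis using R0 by linarith
  next
    case False
    then have "amin * (w \<bullet> u r') \<le> aa r' * (w \<bullet> u r')" using amin(2) by (simp add: mult_right_mono)
    then have "amin * (w \<bullet> u r') \<le> L * M * \<eta> * h" using Pb unfolding P_def by linarith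
    then show ?thesis using amin(1) by (simp add: pos_le_divide_eq mult.commute)
  qed
  have id: "norm (u r')^2 - norm (u r)^2 = 2 * (w \<bullet> u r') - norm w ^2"
    unfolding w_def by (simp add: power2_norm_eq_inner inner_diff_left inner_diff_right inner_commute)
  have "0 \<le> norm w ^2" by simp
  then have "norm (u r')^2 - norm (u r)^2 \<le> 2 * (L * M * \<eta> * h / amin)" using id wu by linarith
  then show ?thesis unfolding h_def by simp
qed

lemma u_mono_sq:
  assumes t: "t0 \<le> t1" "t1 < t2"
  shows "norm (u t2)^2 \<le> norm (u t1)^2"
proof -
  define I where "I = {t1..t2}"
  have II: "I \<subseteq> {t0..}" unfolding I_def using t by auto
  have Ine: "I \<noteq> {}" unfolding I_def using t by simp
  have cy': "continuous_on I y'" by (rule continuous_on_subset[OF y'_cont II])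
  have cy: "continuous_on I y" by (rule continuous_on_subset[OF y_cont II])
  have ca: "continuous_on I aa" by (rule continuous_on_subset[OF aa_cont II])
  obtain rm where rm: "rm \<in> I" "\<And>r. r \<in> I \<Longrightarrow> norm (y' r) \<le> norm (y' rm)"
    using continuous_attains_sup[OF _ Ine, of "\<lambda>r. norm (y' r)"] cy' unfolding I_def
    by (metis compact_Icc continuous_on_norm)
  define M where "M = norm (y' rm)"
  have M0: "0 \<le> M" unfolding M_def by simp
  obtain ra where ra: "ra \<in> I" "\<And>r. r \<in> I \<Longrightarrow> aa ra \<le> aa r"
    using continuous_attains_inf[OF _ Ine ca] unfolding I_def by auto
  define amin where "amin = aa ra"
  have amin0: "0 < amin" unfolding amin_def using aa_pos ra(1) II by auto
  have "bounded (y ` I)" unfolding I_def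
    by (rule compact_imp_bounded[OF compact_continuous_image]) (use cy I_def in auto)
  then obtain L where L: "L-lipschitz_on (y ` I) gradf" using grad_lip by blast
  have L0: "0 \<le> L" using L by (rule lipschitz_on_nonneg)
  have uc: "uniformly_continuous_on I y'" unfolding I_def
    by (rule compact_uniformly_continuous) (use cy' I_def in auto)
  have main: "norm (u t2)^2 - norm (u t1)^2 \<le> \<epsilon> * (t2 - t1)" if e: "0 < \<epsilon>" for \<epsilon>
  proof -
    define K where "K = L * M"
    have K0: "0 \<le> K" unfolding K_def using L0 M0 by simp
    define \<eta> where "\<eta> = \<epsilon> * amin / (2 * (K + 1))"
    have eta0: "0 < \<eta>" unfolding \<eta>_def using e amin0 K0 by simp
    from uc[unfolded uniformly_continuous_on_def, rule_format, OF eta0]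
    obtain \<delta> where d0: "0 < \<delta>" and dd: "\<forall>x\<in>I. \<forall>x'\<in>I. dist x' x < \<delta> \<longrightarrow> dist (y' x') (y' x) < \<eta>"
      by blast
    have d: "\<And>x x'. x \<in> I \<Longrightarrow> x' \<in> I \<Longrightarrow> dist x' x < \<delta> \<Longrightarrow> dist (y' x') (y' x) < \<eta>"
      using dd by blast
    obtain N :: nat where N: "(t2 - t1) / \<delta> < N" using reals_Archimedean2 by blast
    have "0 < (t2 - t1) / \<delta>" using t d0 by simp
    then have Npos: "0 < real N" using N by linarith
    define h where "h = (t2 - t1) / N"
    have h0: "0 < h" unfolding h_def using t Npos by simp
    have hd: "h < \<delta>" unfolding h_def using N d0 Npos by (simp add: divide_less_eq mult.commute pos_divide_less_eq)
    define s where "s k = t1 + real k * h" for k :: nat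
    have sN: "s N = t2" unfolding s_def h_def using Npos by simp
    have sI: "s k \<in> I" if "k \<le> N" for k
    proof -
      have "real k * h \<le> real N * h" using that h0 by (simp add: mult_right_mono)
      then show ?thesis unfolding I_def using sN h0 unfolding s_def by auto
    qed
    have coef: "2 * L * M * \<eta> * h / amin \<le> \<epsilon> * h"
    proof -
      have K1: "K + 1 \<noteq> 0" using K0 by simp
      have "2 * K * \<eta> \<le> 2 * (K + 1) * \<eta>" using eta0 by simp
      also have "2 * (K + 1) * \<eta> = \<epsilon> * amin" unfolding \<eta>_def using K1 by simp
      finally have "2 * K * \<eta> * h \<le> \<epsilon> * amin * h" using h0 by (simp add: mult_right_mono)
      then have "2 * K * \<eta> * h / amin \<le> \<epsilon> * h" using amin0 by (simp add: divide_le_eq mult.commute mult.left_commute)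
      then show ?thesis unfolding K_def by (simp add: mult.assoc)
    qed
    have step: "norm (u (s (Suc k)))^2 - norm (u (s k))^2 \<le> \<epsilon> * h" if k: "Suc k \<le> N" for k
    proof -
      have sk: "s k \<in> I" "s (Suc k) \<in> I" using sI k by auto
      have ssuc: "s (Suc k) = s k + h" unfolding s_def by (simp add: algebra_simps)
      have "norm (u (s (Suc k)))^2 - norm (u (s k))^2 \<le> 2 * L * M * \<eta> * (s (Suc k) - s k) / amin"
      proof (rule u_step[OF _ _ _ _ _ L])
        show "t0 \<le> s k" using sk II by auto
        show "s k < s (Suc k)" using ssuc h0 by simp
        show "0 \<le> \<eta>" using eta0 by simp
        show "y (s k) \<in> y ` I" "y (s (Suc k)) \<in> y ` I" using sk by auto
        show "0 < amin" by (rule amin0)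
        show "amin \<le> aa (s (Suc k))" unfolding amin_def by (rule ra(2)[OF sk(2)])
        fix \<rho> assume \<rho>: "\<rho> \<in> {s k..s (Suc k)}"
        then have \<rho>I: "\<rho> \<in> I" using sk unfolding I_def by auto
        show "norm (y' \<rho>) \<le> M" unfolding M_def by (rule rm(2)[OF \<rho>I])
        have "dist \<rho> (s (Suc k)) < \<delta>" using \<rho> ssuc hd by (auto simp: dist_real_def)
        then have "dist (y' \<rho>) (y' (s (Suc k))) < \<eta>" by (rule d[OF sk(2) \<rho>I])
        then show "norm (y' \<rho> - y' (s (Suc k))) \<le> \<eta>" by (simp add: dist_norm)
      qed
      also have "\<dots> \<le> \<epsilon> * h" using coef ssuc by simp
      finally show ?thesis .
    qed
    have tele: "norm (u (s k))^2 - norm (u t1)^2 \<le> \<epsilon> * h * real k" if "k \<le> N" for k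
      using that
    proof (induction k)
      case 0 then show ?case unfolding s_def by simp
    next
      case (Suc k)
      then have "norm (u (s k))^2 - norm (u t1)^2 \<le> \<epsilon> * h * real k" by simp
      moreover have "norm (u (s (Suc k)))^2 - norm (u (s k))^2 \<le> \<epsilon> * h" by (rule step[OF Suc.prems])
      ultimately show ?case by (simp add: algebra_simps)
    qed
    have "norm (u t2)^2 - norm (u t1)^2 \<le> \<epsilon> * h * real N" using tele[of N] sN by simp
    also have "\<epsilon> * h * real N = \<epsilon> * (t2 - t1)" unfolding h_def using Npos by simp
    finally show ?thesis .
  qed
  show ?thesis
  proof (rule field_le_epsilon)
    fix e :: real assume e: "0 < e"
    have "norm (u t2)^2 - norm (u t1)^2 \<le> (e / (t2 - t1)) * (t2 - t1)" by (rule main) (use e t in simp)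
    then show "norm (u t2)^2 \<le> norm (u t1)^2 + e" using t by simp
  qed
qed

lemma u_mono: "t0 \<le> t1 \<Longrightarrow> t1 \<le> t2 \<Longrightarrow> norm (u t2) \<le> norm (u t1)"
  using u_mono_sq[of t1 t2] by (cases "t1 = t2") (auto intro: power2_le_imp_le)

end

context dyn begin

lemma Theta:
  assumes st: "t0 \<le> s" "s \<le> t"
  shows "V t + norm (u t)^2 * (tau t * tau t) / 2 \<le> V s + norm (u t)^2 * (tau s * tau s) / 2"
proof -
  define c where "c = norm (u t)^2"
  have "(\<lambda>r. V r + c * (tau r * tau r) / 2) t \<le> (\<lambda>r. V r + c * (tau r * tau r) / 2) s"
  proof (rule deriv_nonpos_mono'[OF st])
    fix r assume r: "t0 \<le> r"
    show "((\<lambda>r. V r + c * (tau r * tau r) / 2) has_real_derivative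
       (aa r * E r + (- aa r * norm (u r)^2) * tau r + (- 2 * aa r * ((y r - xs) \<bullet> u r)) / 2)
       + c * (aa r * tau r + aa r * tau r) / 2) (at r within {t0..})"
      by (intro DERIV_add DERIV_cdivide DERIV_cmult DERIV_mult V_deriv tau_deriv' r)
  next
    fix r assume r: "r \<in> {s..t}"
    then have r0: "t0 \<le> r" using st by simp
    have "c \<le> norm (u r)^2" unfolding c_def using u_mono[OF r0, of t] r by (simp add: power_mono)
    then have "aa r * tau r * c \<le> aa r * tau r * norm (u r)^2"
      using aa_pos[OF r0] tau_pos[OF r0] by (simp add: mult_left_mono)
    moreover have "c * (aa r * tau r + aa r * tau r) / 2 = aa r * tau r * c" by (simp add: algebra_simps)
    ultimately show "(aa r * E r + (- aa r * norm (u r)^2) * tau r + (- 2 * aa r * ((y r - xs) \<bullet> u r)) / 2)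
       + c * (aa r * tau r + aa r * tau r) / 2 \<le> 0"
      using V_deriv_le[OF r0] by linarith
  qed
  then show ?thesis unfolding c_def by simp
qed

lemma K_exists: "\<exists>K>0. \<forall>t\<ge>t0. norm (u t) * tau t \<le> K"
proof -
  define K where "K = 2 * sqrt (V t0) + 2 * tau t0 * norm (u t0) + 1"
  have V0: "0 \<le> V t0" by (rule V_nonneg) simp
  have tau0: "0 < tau t0" by (rule tau_pos) simp
  have K0: "0 < K" unfolding K_def using V0 tau0 by (simp add: add_nonneg_pos)
  have "norm (u t) * tau t \<le> K" if t: "t \<ge> t0" for t
  proof (cases "2 * (tau t0 * tau t0) \<le> tau t * tau t")
    case True
    have "V t + norm (u t)^2 * (tau t * tau t) / 2 \<le> V t0 + norm (u t)^2 * (tau t0 * tau t0) / 2"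
      by (rule Theta) (use t in auto)
    moreover have "0 \<le> V t" by (rule V_nonneg[OF t])
    moreover have "norm (u t)^2 * (2 * (tau t0 * tau t0)) \<le> norm (u t)^2 * (tau t * tau t)"
      by (rule mult_left_mono[OF True]) simp
    moreover have "norm (u t)^2 * (2 * (tau t0 * tau t0)) = 2 * (norm (u t)^2 * (tau t0 * tau t0))" by simp
    ultimately have "norm (u t)^2 * (tau t * tau t) \<le> 4 * V t0" by linarith
    then have "(norm (u t) * tau t)^2 \<le> (2 * sqrt (V t0))^2"
      using V0 by (simp add: power_mult_distrib power2_eq_square ac_simps)
    then have "norm (u t) * tau t \<le> 2 * sqrt (V t0)"
      by (rule power2_le_imp_le) (use V0 in simp)
    moreover have "0 \<le> 2 * tau t0 * norm (u t0)" using tau0 by simp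
    ultimately show ?thesis unfolding K_def by linarith
  next
    case False
    have "0 < tau t0 * tau t0" using tau0 by simp
    then have lt: "tau t * tau t < (2 * tau t0) * (2 * tau t0)" using False by simp
    have "tau t < 2 * tau t0"
    proof (rule ccontr)
      assume "\<not> tau t < 2 * tau t0"
      then have h2: "2 * tau t0 \<le> tau t" by simp
      have "(2 * tau t0) * (2 * tau t0) \<le> tau t * tau t"
        by (rule mult_mono[OF h2 h2]) (use tau0 h2 in auto)
      then show False using lt by simp
    qed
    moreover have "norm (u t) \<le> norm (u t0)" by (rule u_mono) (use t in auto)
    ultimately have "norm (u t) * tau t \<le> norm (u t0) * (2 * tau t0)"
      using tau_pos[OF t] by (intro mult_mono) auto
    moreover have "0 \<le> sqrt (V t0)" using V0 by simp
    moreover have "norm (u t0) * (2 * tau t0) = 2 * tau t0 * norm (u t0)" by simp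
    ultimately show ?thesis unfolding K_def by linarith
  qed
  with K0 show ?thesis by blast
qed

definition Kc where "Kc = (SOME K. K > 0 \<and> (\<forall>t\<ge>t0. norm (u t) * tau t \<le> K))"

lemma Kc: "0 < Kc" "t \<ge> t0 \<Longrightarrow> norm (u t) * tau t \<le> Kc"
  using someI_ex[OF K_exists] unfolding Kc_def by blast+

definition \<theta> where "\<theta> = (p - 1) / (p * q + p - 1)"
definition \<beta> where "\<beta> = 1 + q - 1 / p"
definition c0 where "c0 = (Kc * q) powr (- \<theta>)"

lemma pq_pos: "0 < p * q + p - 1"
proof -
  have "0 < p * q" using p_ge q_pos by simp
  then show ?thesis using p_ge by linarith
qed

lemma theta_range: "0 \<le> \<theta>" "\<theta> < 1"
  unfolding \<theta>_def using p_ge q_pos pq_pos by (auto simp: divide_less_eq mult_pos_pos)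

lemma beta_eq: "q / \<beta> = 1 - \<theta>"
proof -
  have p0: "p \<noteq> 0" using p_ge by simp
  have "\<beta> = (p * q + p - 1) / p" unfolding \<beta>_def using p0 by (simp add: field_simps)
  moreover have "1 - \<theta> = p * q / (p * q + p - 1)" unfolding \<theta>_def using pq_pos by (simp add: field_simps)
  moreover have "q / ((p * q + p - 1) / p) = p * q / (p * q + p - 1)" by (simp add: mult.commute)
  ultimately show ?thesis by simp
qed

lemma beta_alt: "\<beta> = (p * q + p - 1) / p"
  unfolding \<beta>_def using p_ge by (simp add: field_simps)

lemma beta_pos: "0 < \<beta>"
  unfolding beta_alt using pq_pos p_ge by simp

lemma c0_pos: "0 < c0" unfolding c0_def using Kc(1) q_pos by simp

lemma lam_lower:
  assumes t: "t \<ge> t0"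
  shows "c0 * Lam t powr \<theta> \<le> lam t powr (1/q)"
proof -
  define l where "l = lam t"
  define La where "La = Lam t"
  define n where "n = norm (y' t)"
  define m where "m = l powr (1/q)"
  have l0: "0 < l" unfolding l_def by (rule lam_pos[OF t])
  have La0: "0 < La" unfolding La_def by (rule Lam_pos[OF t])
  have m0: "0 < m" unfolding m_def using l0 by simp
  have tau_eq: "tau t = (1 / q powr q) * La powr q" unfolding tau_def La_def by (rule tau_Lam)
  have aa_eq: "aa t = (1 / q powr q) * (q * La powr (q - 1)) * m" unfolding aa_def La_def m_def l_def ..
  have atau: "aa t = tau t * (q * m / La)"
    unfolding aa_eq tau_eq using La0 by (simp add: powr_diff field_simps)
  have n_eq: "n = aa t * norm (u t)" unfolding n_def using y'_eq[OF t] aa_pos[OF t] by simp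
  have nb: "n \<le> Kc * q * m / La"
  proof -
    have "n = (q * m / La) * (norm (u t) * tau t)" unfolding n_eq atau by (simp add: algebra_simps)
    also have "\<dots> \<le> (q * m / La) * Kc" by (rule mult_left_mono[OF Kc(2)[OF t]]) (use q_pos m0 La0 in simp)
    finally show ?thesis by (simp add: ac_simps)
  qed
  have cl: "l powr p * rpow n (p - 1) = 1" unfolding l_def n_def by (rule closed_loop[OF t])
  show ?thesis
  proof (cases "p = 1")
    case True
    then have "l = 1" using cl l0 by (simp add: rpow_def)
    then show ?thesis using True unfolding \<theta>_def c0_def La_def[symmetric] l_def[symmetric] using La0 by simp
  next
    case False
    then have p1: "p > 1" using p_ge by simp
    have n0: "0 < n"
    proof (rule ccontr)
      assume "\<not> 0 < n"
      then have "n = 0" unfolding n_def by simp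
      then show False using cl p1 by (simp add: rpow_def)
    qed
    have "ln (l powr p * n powr (p - 1)) = 0" using cl p1 by (simp add: rpow_def)
    then have lnE: "p * ln l + (p - 1) * ln n = 0" using l0 n0 by (simp add: ln_mult)
    have "ln n \<le> ln (Kc * q * m / La)" using nb n0 by simp
    also have "\<dots> = ln (Kc * q) + ln m - ln La" using Kc(1) q_pos m0 La0 by (simp add: ln_div ln_mult)
    finally have lnn: "ln n \<le> ln (Kc * q) + ln m - ln La" .
    have lnm: "ln m = ln l / q" unfolding m_def using l0 by simp
    have "(p - 1) * ln n \<le> (p - 1) * (ln (Kc * q) + ln m - ln La)"
      by (rule mult_left_mono[OF lnn]) (use p1 in simp)
    moreover have "p * ln l = p * q * ln m" unfolding lnm using q_pos by simp
    ultimately have "0 \<le> p * q * ln m + (p - 1) * (ln (Kc * q) + ln m - ln La)" using lnE by linarith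
    then have "(p - 1) * (ln La - ln (Kc * q)) \<le> (p * q + p - 1) * ln m" by (simp add: algebra_simps)
    then have key: "\<theta> * (ln La - ln (Kc * q)) \<le> ln m"
      unfolding \<theta>_def using pq_pos by (simp add: divide_le_eq mult.commute)
    have "c0 * La powr \<theta> = exp (\<theta> * (ln La - ln (Kc * q)))"
      unfolding c0_def using La0 Kc(1) q_pos by (simp add: powr_def exp_diff exp_minus field_simps right_diff_distrib)
    also have "\<dots> \<le> exp (ln m)" using key by simp
    also have "\<dots> = m" using m0 by simp
    finally show ?thesis unfolding m_def l_def La_def .
  qed
qed

end

lemma tendsto0_criterion:
  fixes g :: "real \<Rightarrow> real"
  assumes "\<And>\<epsilon>. \<epsilon> > 0 \<Longrightarrow> \<exists>T. \<forall>t\<ge>T. 0 \<le> g t \<and> g t < \<epsilon>"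
  shows "(g \<longlongrightarrow> 0) at_top"
proof (rule tendstoI)
  fix e :: real assume "0 < e"
  then obtain T where T: "\<forall>t\<ge>T. 0 \<le> g t \<and> g t < e" using assms by blast
  show "\<forall>\<^sub>F t in at_top. dist (g t) 0 < e"
    unfolding eventually_at_top_linorder dist_real_def by (intro exI[of _ T]) (use T in auto)
qed

context dyn begin

definition zz where "zz = 1 - \<theta>"

lemma zz_pos: "0 < zz" unfolding zz_def using theta_range by simp

lemma zz_beta: "zz * \<beta> = q"
  using beta_eq beta_pos unfolding zz_def by (simp add: field_simps)

lemma Lam_t0: "Lam t0 = t0" unfolding Lam_def by simp

lemma LamZ_deriv: "t \<ge> t0 \<Longrightarrow> ((\<lambda>r. Lam r powr zz) has_real_derivative (zz * Lam t powr (zz - 1)) * lam t powr (1/q)) (at t within {t0..})"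
  by (rule DERIV_chain'[OF Lam_deriv has_real_derivative_powr[OF Lam_pos]])

lemma LamZ_growth:
  assumes t: "t \<ge> t0"
  shows "t0 powr zz + zz * c0 * (t - t0) \<le> Lam t powr zz"
proof -
  have "(\<lambda>r. - (Lam r powr zz - zz * c0 * r)) t \<le> (\<lambda>r. - (Lam r powr zz - zz * c0 * r)) t0"
  proof (rule deriv_nonpos_mono'[OF order_refl t])
    fix r assume r: "t0 \<le> r"
    show "((\<lambda>r. - (Lam r powr zz - zz * c0 * r)) has_real_derivative
        - ((zz * Lam r powr (zz - 1)) * lam r powr (1/q) - zz * c0 * 1)) (at r within {t0..})"
      by (intro DERIV_minus DERIV_diff LamZ_deriv DERIV_cmult DERIV_ident r)
  next
    fix r assume "r \<in> {t0..t}"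
    then have r: "t0 \<le> r" by simp
    have La0: "0 < Lam r" by (rule Lam_pos[OF r])
    have "c0 * Lam r powr \<theta> * Lam r powr (zz - 1) \<le> lam r powr (1/q) * Lam r powr (zz - 1)"
      by (rule mult_right_mono[OF lam_lower[OF r]]) simp
    moreover have "Lam r powr \<theta> * Lam r powr (zz - 1) = 1"
      unfolding zz_def using La0 by (simp add: powr_add[symmetric])
    ultimately have "c0 \<le> Lam r powr (zz - 1) * lam r powr (1/q)" by (simp add: ac_simps)
    then have "zz * c0 \<le> zz * (Lam r powr (zz - 1) * lam r powr (1/q))"
      by (rule mult_left_mono) (use zz_pos in simp)
    then show "- ((zz * Lam r powr (zz - 1)) * lam r powr (1/q) - zz * c0 * 1) \<le> 0"
      by (simp add: ac_simps)
  qed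
  then have "zz * c0 * t - Lam t powr zz \<le> zz * c0 * t0 - t0 powr zz" using Lam_t0 by simp
  moreover have "zz * c0 * (t - t0) = zz * c0 * t - zz * c0 * t0" by (simp add: algebra_simps)
  ultimately show ?thesis by linarith
qed

definition mm where "mm = min (zz * c0) (t0 powr (zz - 1))"

lemma mm_pos: "0 < mm" unfolding mm_def using zz_pos c0_pos t0_pos by simp

lemma LamZ_lower:
  assumes t: "t \<ge> t0"
  shows "mm * t \<le> Lam t powr zz"
proof -
  have "t0 powr zz = t0 powr ((zz - 1) + 1)" by simp
  also have "\<dots> = t0 powr (zz - 1) * t0 powr 1" by (rule powr_add)
  also have "t0 powr 1 = t0" using t0_pos by simp
  finally have "t0 powr zz = t0 powr (zz - 1) * t0" .
  moreover have "mm * t0 \<le> t0 powr (zz - 1) * t0"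
    by (rule mult_right_mono) (use t0_pos in \<open>auto simp: mm_def\<close>)
  moreover have "mm * (t - t0) \<le> zz * c0 * (t - t0)"
    by (rule mult_right_mono) (use t in \<open>auto simp: mm_def\<close>)
  moreover have "mm * t = mm * t0 + mm * (t - t0)" by (simp add: algebra_simps)
  ultimately show ?thesis using LamZ_growth[OF t] by linarith
qed

definition \<kappa> where "\<kappa> = (1 / q powr q) * mm powr \<beta>"

lemma kappa_pos: "0 < \<kappa>" unfolding \<kappa>_def using mm_pos q_pos by simp

lemma tau_lower:
  assumes t: "t \<ge> t0"
  shows "\<kappa> * t powr \<beta> \<le> tau t"
proof -
  have "Lam t powr q = (Lam t powr zz) powr \<beta>" by (simp add: powr_powr zz_beta)
  moreover have "(mm * t) powr \<beta> \<le> (Lam t powr zz) powr \<beta>"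
    by (rule powr_mono2) (use beta_pos mm_pos t t0_pos LamZ_lower[OF t] in auto)
  moreover have "(mm * t) powr \<beta> = mm powr \<beta> * t powr \<beta>"
    by (rule powr_mult)
  ultimately have "mm powr \<beta> * t powr \<beta> \<le> Lam t powr q" by simp
  then have "(1 / q powr q) * (mm powr \<beta> * t powr \<beta>) \<le> (1 / q powr q) * Lam t powr q"
    using mult_left_mono[of _ _ "1 / q powr q"] by simp
  then show ?thesis unfolding \<kappa>_def tau_def tau_Lam by (simp add: ac_simps)
qed

lemma tau_big: "\<exists>T\<ge>t0. \<forall>t\<ge>T. B \<le> tau t"
proof -
  define T where "T = max t0 ((\<bar>B\<bar> / \<kappa>) powr (1 / \<beta>))"
  have "B \<le> tau t" if t: "t \<ge> T" for t
  proof -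
    have t0t: "t0 \<le> t" using t unfolding T_def by simp
    have "((\<bar>B\<bar> / \<kappa>) powr (1 / \<beta>)) powr \<beta> \<le> t powr \<beta>"
      by (rule powr_mono2) (use beta_pos t T_def in auto)
    moreover have "((\<bar>B\<bar> / \<kappa>) powr (1 / \<beta>)) powr \<beta> = \<bar>B\<bar> / \<kappa>"
      using beta_pos kappa_pos by (simp add: powr_powr)
    ultimately have "\<bar>B\<bar> / \<kappa> \<le> t powr \<beta>" by simp
    then have "\<bar>B\<bar> \<le> \<kappa> * t powr \<beta>" using kappa_pos by (simp add: divide_le_eq mult.commute)
    then show ?thesis using tau_lower[OF t0t] by linarith
  qed
  moreover have "T \<ge> t0" unfolding T_def by simp
  ultimately show ?thesis by blast
qed

lemma tau_eventually: "\<exists>T\<ge>t0. \<forall>t\<ge>T. 2 * tau s \<le> tau t"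
  using tau_big by blast

lemma hh_conv: "\<exists>H. (hh \<longlongrightarrow> H) at_top \<and> (\<forall>t\<ge>t0. H \<le> hh t)"
proof (rule dec_conv)
  fix s t assume "t0 \<le> s" "s \<le> t"
  then show "hh t \<le> hh s" unfolding hh_def by (intro h_mono) (use xs_min in auto)
qed (simp add: hh_def)

lemma V_conv: "\<exists>W. (V \<longlongrightarrow> W) at_top \<and> (\<forall>t\<ge>t0. W \<le> V t)"
  by (rule dec_conv) (auto intro: V_mono V_nonneg)

lemma E_rate: "((\<lambda>t. E t * t powr \<beta>) \<longlongrightarrow> 0) at_top"
proof (rule tendsto0_criterion)
  fix \<epsilon> :: real assume e: "\<epsilon> > 0"
  obtain H where H: "(hh \<longlongrightarrow> H) at_top" "\<And>t. t \<ge> t0 \<Longrightarrow> H \<le> hh t" using hh_conv by blast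
  have "\<forall>\<^sub>F s in at_top. dist (hh s) H < \<epsilon> * \<kappa>" using H(1) e kappa_pos by (intro tendstoD) auto
  then obtain s0 where s0: "\<And>s. s \<ge> s0 \<Longrightarrow> dist (hh s) H < \<epsilon> * \<kappa>" unfolding eventually_at_top_linorder by blast
  define s where "s = max t0 s0"
  have ds: "dist (hh s) H < \<epsilon> * \<kappa>" by (rule s0) (simp add: s_def)
  have s: "t0 \<le> s" "hh s - H < \<epsilon> * \<kappa>"
    using ds abs_ge_self[of "hh s - H"] unfolding s_def dist_real_def by auto
  obtain T where T: "T \<ge> t0" "\<And>t. t \<ge> T \<Longrightarrow> 2 * tau s \<le> tau t" using tau_eventually by blast
  have "0 \<le> E t * t powr \<beta> \<and> E t * t powr \<beta> < \<epsilon>" if t: "t \<ge> max T s" for t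
  proof -
    have ts: "s \<le> t" "t0 \<le> t" using t s by auto
    have Ph: "(tau t - tau s) * E t + hh t / 2 \<le> hh s / 2" by (rule Phi_mono[OF s(1) ts(1)])
    have "tau t / 2 \<le> tau t - tau s" using T(2)[of t] t by simp
    then have "tau t / 2 * E t \<le> (tau t - tau s) * E t" by (rule mult_right_mono) (rule E_nonneg)
    then have "tau t * E t \<le> hh s - hh t" using Ph by simp
    also have "\<dots> \<le> hh s - H" using H(2)[OF ts(2)] by simp
    finally have tE: "tau t * E t < \<epsilon> * \<kappa>" using s(2) by simp
    have "\<kappa> * t powr \<beta> * E t \<le> tau t * E t"
      by (rule mult_right_mono[OF tau_lower[OF ts(2)] E_nonneg])
    then have "\<kappa> * (E t * t powr \<beta>) < \<kappa> * \<epsilon>" using tE by (simp add: ac_simps)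
    then have "E t * t powr \<beta> < \<epsilon>" using kappa_pos by simp
    moreover have "0 \<le> E t * t powr \<beta>" using E_nonneg by simp
    ultimately show ?thesis by simp
  qed
  then show "\<exists>T. \<forall>t\<ge>T. 0 \<le> E t * t powr \<beta> \<and> E t * t powr \<beta> < \<epsilon>" by blast
qed

lemma u_rate: "((\<lambda>t. norm (u t) * t powr \<beta>) \<longlongrightarrow> 0) at_top"
proof (rule tendsto0_criterion)
  fix \<epsilon> :: real assume e: "\<epsilon> > 0"
  obtain W where W: "(V \<longlongrightarrow> W) at_top" "\<And>t. t \<ge> t0 \<Longrightarrow> W \<le> V t" using V_conv by blast
  have "\<forall>\<^sub>F s in at_top. dist (V s) W < (\<epsilon> * \<kappa>)^2 / 4" using W(1) e kappa_pos by (intro tendstoD) auto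
  then obtain s0 where s0: "\<And>s. s \<ge> s0 \<Longrightarrow> dist (V s) W < (\<epsilon> * \<kappa>)^2 / 4" unfolding eventually_at_top_linorder by blast
  define s where "s = max t0 s0"
  have ds: "dist (V s) W < (\<epsilon> * \<kappa>)^2 / 4" by (rule s0) (simp add: s_def)
  have s1: "V s - W < (\<epsilon> * \<kappa>)^2 / 4"
    using ds abs_ge_self[of "V s - W"] unfolding dist_real_def by linarith
  have s: "t0 \<le> s" "V s - W < (\<epsilon> * \<kappa>)^2 / 4" using s1 unfolding s_def by auto
  obtain T where T: "T \<ge> t0" "\<And>t. t \<ge> T \<Longrightarrow> 2 * tau s \<le> tau t" using tau_eventually by blast
  have "0 \<le> norm (u t) * t powr \<beta> \<and> norm (u t) * t powr \<beta> < \<epsilon>" if t: "t \<ge> max T s" for t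
  proof -
    have ts: "s \<le> t" "t0 \<le> t" using t s by auto
    define c where "c = norm (u t)^2"
    have Th: "V t + c * (tau t * tau t) / 2 \<le> V s + c * (tau s * tau s) / 2"
      unfolding c_def by (rule Theta[OF s(1) ts(1)])
    have taus0: "0 < tau s" by (rule tau_pos[OF s(1)])
    have tt: "2 * tau s \<le> tau t" using T(2)[of t] t by simp
    have "(2 * tau s) * (2 * tau s) \<le> tau t * tau t" by (rule mult_mono[OF tt tt]) (use taus0 tt in auto)
    then have "c * ((2 * tau s) * (2 * tau s)) \<le> c * (tau t * tau t)" by (rule mult_left_mono) (simp add: c_def)
    moreover have "c * ((2 * tau s) * (2 * tau s)) = 4 * (c * (tau s * tau s))" by simp
    moreover have "0 \<le> c * (tau t * tau t)" by (simp add: c_def)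
    ultimately have "c * (tau t * tau t) / 4 \<le> V s - V t" using Th by linarith
    also have "\<dots> \<le> V s - W" using W(2)[OF ts(2)] by simp
    finally have "c * (tau t * tau t) < (\<epsilon> * \<kappa>)^2" using s(2) by simp
    then have "(norm (u t) * tau t)^2 < (\<epsilon> * \<kappa>)^2" unfolding c_def by (simp add: power2_eq_square ac_simps)
    then have ut: "norm (u t) * tau t < \<epsilon> * \<kappa>"
      by (rule power_less_imp_less_base) (use e kappa_pos in simp)
    have "norm (u t) * (\<kappa> * t powr \<beta>) \<le> norm (u t) * tau t"
      by (rule mult_left_mono[OF tau_lower[OF ts(2)]]) simp
    then have "\<kappa> * (norm (u t) * t powr \<beta>) < \<kappa> * \<epsilon>" using ut by (simp add: ac_simps)
    then have "norm (u t) * t powr \<beta> < \<epsilon>" using kappa_pos by simp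
    moreover have "0 \<le> norm (u t) * t powr \<beta>" by simp
    ultimately show ?thesis by simp
  qed
  then show "\<exists>T. \<forall>t\<ge>T. 0 \<le> norm (u t) * t powr \<beta> \<and> norm (u t) * t powr \<beta> < \<epsilon>" by blast
qed

end

lemma nonneg_integrable_Ici:
  fixes g :: "real \<Rightarrow> real"
  assumes int: "\<And>T. T \<ge> a \<Longrightarrow> g integrable_on {a..T}"
    and nn: "\<And>t. t \<ge> a \<Longrightarrow> 0 \<le> g t"
    and bnd: "\<And>T. T \<ge> a \<Longrightarrow> integral {a..T} g \<le> B"
  shows "g integrable_on {a..}"
proof -
  define F where "F k x = (if x \<in> {a..a + real k} then g x else 0)" for k :: nat and x
  have eqI: "{a..a + real k} \<inter> {a..} = {a..a + real k}" for k by auto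
  have "g integrable_on {a..} \<and> ((\<lambda>k. integral {a..} (F k)) \<longlonglongrightarrow> integral {a..} g)"
  proof (rule monotone_convergence_increasing)
    fix k
    show "F k integrable_on {a..}"
      unfolding F_def integrable_restrict_Int eqI by (rule int) simp
  next
    fix k x assume "x \<in> {a..}"
    then show "F k x \<le> F (Suc k) x" unfolding F_def using nn by auto
  next
    fix x :: real assume x: "x \<in> {a..}"
    obtain N :: nat where N: "x - a \<le> real N" using real_arch_simple by blast
    have "\<forall>\<^sub>F k in sequentially. F k x = g x"
      unfolding eventually_sequentially F_def using x N by (intro exI[of _ N]) auto
    then show "(\<lambda>k. F k x) \<longlonglongrightarrow> g x" by (rule tendsto_eventually)
  next
    have "norm (integral {a..} (F k)) \<le> B" for k
    proof -
      have I: "integral {a..} (F k) = integral {a..a + real k} g"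
        unfolding F_def Henstock_Kurzweil_Integration.integral_restrict_Int eqI ..
      have "0 \<le> integral {a..a + real k} g" by (rule integral_nonneg[OF int]) (use nn in auto)
      moreover have "integral {a..a + real k} g \<le> B" by (rule bnd) simp
      ultimately show ?thesis unfolding I by simp
    qed
    then show "bounded (range (\<lambda>k. integral {a..} (F k)))" unfolding bounded_iff by blast
  qed
  then show ?thesis by blast
qed

context dyn begin

lemma k_int_bound:
  assumes T: "T \<ge> t0"
  shows "integral {t0..T} (\<lambda>r. aa r * tau r * norm (u r)^2) \<le> V t0"
    and "(\<lambda>r. aa r * tau r * norm (u r)^2) integrable_on {t0..T}"
proof -
  define V' where "V' r = aa r * E r + (- aa r * norm (u r)^2) * tau r + (- 2 * aa r * ((y r - xs) \<bullet> u r)) / 2" for r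
  have I1: "(V' has_integral (V T - V t0)) {t0..T}"
  proof (rule fundamental_theorem_of_calculus[OF T])
    fix x assume x: "x \<in> {t0..T}"
    have "(V has_real_derivative V' x) (at x within {t0..T})"
      unfolding V'_def by (rule has_field_derivative_subset[OF V_deriv]) (use x in auto)
    then show "(V has_vector_derivative V' x) (at x within {t0..T})"
      by (simp add: has_real_derivative_iff_has_vector_derivative)
  qed
  have IV: "((\<lambda>r. - V' r) has_integral (V t0 - V T)) {t0..T}"
    using has_integral_neg[OF I1] by simp
  have tc: "continuous_on {t0..} tau" using tau_cont unfolding tau_def[abs_def] .
  have "continuous_on {t0..} (\<lambda>r. aa r * tau r * norm (u r)^2)"
    by (intro continuous_on_mult continuous_on_power continuous_on_norm aa_cont u_cont tc)
  then have cont: "continuous_on {t0..T} (\<lambda>r. aa r * tau r * norm (u r)^2)"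
    by (rule continuous_on_subset) auto
  then show ki: "(\<lambda>r. aa r * tau r * norm (u r)^2) integrable_on {t0..T}"
    by (rule integrable_continuous_real)
  have "integral {t0..T} (\<lambda>r. aa r * tau r * norm (u r)^2) \<le> V t0 - V T"
  proof (rule has_integral_le[OF integrable_integral[OF ki] IV])
    fix r assume "r \<in> {t0..T}"
    then have r: "t0 \<le> r" by simp
    show "aa r * tau r * norm (u r)^2 \<le> - V' r" using V_deriv_le[OF r] unfolding V'_def by (simp add: ac_simps)
  qed
  then show "integral {t0..T} (\<lambda>r. aa r * tau r * norm (u r)^2) \<le> V t0" using V_nonneg[OF T] by linarith
qed

definition \<gamma> where "\<gamma> = 1 + 1 / q - 1 / (p * q)"

lemma gamma_eq: "\<gamma> = \<beta> / q"
  unfolding \<gamma>_def \<beta>_def using q_pos p_ge by (simp add: field_simps)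

lemma gamma_pos: "0 < \<gamma>" unfolding gamma_eq using beta_pos q_pos by simp

lemma gamma_zz: "zz * \<gamma> = 1"
  unfolding gamma_eq using zz_beta[symmetric] q_pos by simp

lemma n_pow:
  assumes t: "t \<ge> t0" and n0: "0 < norm (y' t)"
  shows "norm (y' t) powr ((p - 1) / (p * q)) = lam t powr (- 1 / q)"
proof -
  define l where "l = lam t"
  define n where "n = norm (y' t)"
  have l0: "0 < l" unfolding l_def by (rule lam_pos[OF t])
  have n0': "0 < n" unfolding n_def by (rule n0)
  have cl: "l powr p * rpow n (p - 1) = 1" unfolding l_def n_def by (rule closed_loop[OF t])
  have key: "(p - 1) * ln n = - p * ln l"
  proof (cases "p = 1")
    case True
    then have "l = 1" using cl l0 by (simp add: rpow_def)
    then show ?thesis using True by simp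
  next
    case False
    have "ln (l powr p * n powr (p - 1)) = 0" using cl False by (simp add: rpow_def)
    then show ?thesis using l0 n0' by (simp add: ln_mult)
  qed
  have "((p - 1) / (p * q)) * ln n = (- 1 / q) * ln l"
  proof -
    have "((p - 1) / (p * q)) * ln n = ((p - 1) * ln n) / (p * q)" by simp
    also have "\<dots> = (- p * ln l) / (p * q)" unfolding key ..
    also have "\<dots> = (- 1 / q) * ln l" using p_ge q_pos by (simp add: field_simps)
    finally show ?thesis .
  qed
  then show ?thesis unfolding n_def[symmetric] l_def[symmetric] using l0 n0' by (simp add: powr_def)
qed

definition Cg where "Cg = q * mm powr (- \<gamma>)"

lemma gint_bound:
  assumes t: "t \<ge> t0"
  shows "t powr \<gamma> * norm (y' t) powr (2 + (p - 1) / (p * q)) \<le> Cg * (aa t * tau t * norm (u t)^2)"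
proof (cases "norm (y' t) = 0")
  case True
  have "0 \<le> Cg * (aa t * tau t * norm (u t)^2)"
    unfolding Cg_def using q_pos aa_pos[OF t] tau_pos[OF t] by simp
  then show ?thesis using True by simp
next
  case False
  then have n0: "0 < norm (y' t)" by simp
  define La where "La = Lam t"
  define m where "m = lam t powr (1/q)"
  have La0: "0 < La" unfolding La_def by (rule Lam_pos[OF t])
  have m0: "0 < m" unfolding m_def using lam_pos[OF t] by simp
  have t0t: "0 < t" using t t0_pos by simp
  have "(mm * t) powr \<gamma> \<le> (Lam t powr zz) powr \<gamma>"
    by (rule powr_mono2) (use gamma_pos mm_pos t0t LamZ_lower[OF t] in auto)
  then have "mm powr \<gamma> * t powr \<gamma> \<le> La"
    unfolding La_def by (simp add: powr_mult powr_powr gamma_zz Lam_pos[OF t] less_imp_le)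
  then have tg: "t powr \<gamma> \<le> La * mm powr (- \<gamma>)"
    using mm_pos by (simp add: powr_minus divide_simps mult.commute)
  have "norm (y' t) powr (2 + (p - 1) / (p * q)) = norm (y' t) powr 2 * norm (y' t) powr ((p - 1) / (p * q))"
    by (rule powr_add)
  also have "\<dots> = (aa t * norm (u t))^2 * lam t powr (- 1 / q)"
    using n_pow[OF t n0] y'_eq[OF t] aa_pos[OF t] by simp
  also have "lam t powr (- 1 / q) = 1 / m" unfolding m_def by (simp add: powr_minus divide_inverse minus_divide_left)
  finally have nv: "norm (y' t) powr (2 + (p - 1) / (p * q)) = (aa t * norm (u t))^2 / m" by simp
  have aa_eq: "aa t = (1 / q powr q) * (q * La powr (q - 1)) * m" unfolding aa_def La_def m_def ..
  have tau_eq: "tau t = (1 / q powr q) * La powr q" unfolding tau_def La_def by (rule tau_Lam)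
  have key: "La * (aa t / m) = q * tau t"
    unfolding aa_eq tau_eq using La0 m0 by (simp add: powr_diff field_simps)
  have "t powr \<gamma> * norm (y' t) powr (2 + (p - 1) / (p * q)) \<le> (La * mm powr (- \<gamma>)) * ((aa t * norm (u t))^2 / m)"
    unfolding nv by (rule mult_right_mono[OF tg]) (use m0 in simp)
  also have "\<dots> = mm powr (- \<gamma>) * (La * (aa t / m)) * (aa t * norm (u t)^2)"
    by (simp add: power2_eq_square field_simps)
  also have "\<dots> = Cg * (aa t * tau t * norm (u t)^2)"
    unfolding key Cg_def by (simp add: ac_simps)
  finally show ?thesis .
qed

lemma integrable_result:
  "(\<lambda>t. t powr (1 + 1 / q - 1 / (p * q)) * norm (y' t) powr (2 + (p - 1) / (p * q))) integrable_on {t0..}"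
proof (rule nonneg_integrable_Ici)
  let ?g = "\<lambda>t. t powr (1 + 1 / q - 1 / (p * q)) * norm (y' t) powr (2 + (p - 1) / (p * q))"
  let ?k = "\<lambda>r. aa r * tau r * norm (u r)^2"
  have e0: "0 < 2 + (p - 1) / (p * q)" using p_ge q_pos by (simp add: add_pos_nonneg)
  have gc: "continuous_on {t0..} ?g"
  proof (intro continuous_on_mult continuous_on_powr')
    show "continuous_on {t0..} (\<lambda>t. norm (y' t))" by (intro continuous_intros y'_cont)
  qed (use t0_pos e0 in \<open>auto intro!: continuous_intros\<close>)
  fix T assume T: "T \<ge> t0"
  show gi: "?g integrable_on {t0..T}"
    by (rule integrable_continuous_real, rule continuous_on_subset[OF gc]) auto
  have "integral {t0..T} ?g \<le> integral {t0..T} (\<lambda>r. Cg * ?k r)"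
  proof (rule integral_le[OF gi])
    show "(\<lambda>r. Cg * ?k r) integrable_on {t0..T}"
      using integrable_on_cmult_left[OF k_int_bound(2)[OF T], of Cg] by simp
    fix r assume "r \<in> {t0..T}"
    then show "?g r \<le> Cg * ?k r" using gint_bound[of r] unfolding \<gamma>_def by simp
  qed
  also have "\<dots> = Cg * integral {t0..T} ?k" by simp
  also have "\<dots> \<le> Cg * V t0"
    by (rule mult_left_mono[OF k_int_bound(1)[OF T]]) (use q_pos mm_pos in \<open>simp add: Cg_def\<close>)
  finally show "integral {t0..T} ?g \<le> Cg * V t0" .
next
  fix t assume "t0 \<le> t"
  then show "0 \<le> t powr (1 + 1 / q - 1 / (p * q)) * norm (y' t) powr (2 + (p - 1) / (p * q))" by simp
qed

end

context dyn begin

abbreviation Sm where "Sm \<equiv> {x. \<forall>z. f x \<le> f z}"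

lemma xs_Sm: "xs \<in> Sm" using xs_min by simp

lemma Sm_f: "x \<in> Sm \<Longrightarrow> f x = f xs"
  using xs_min by (simp add: antisym)

lemma fej: "x \<in> Sm \<Longrightarrow> \<exists>L. ((\<lambda>t. norm (y t - x)^2) \<longlongrightarrow> L) at_top"
proof -
  assume x: "x \<in> Sm"
  have "\<exists>L. ((\<lambda>t. norm (y t - x)^2) \<longlongrightarrow> L) at_top \<and> (\<forall>t\<ge>t0. L \<le> norm (y t - x)^2)"
  proof (rule dec_conv)
    fix s t assume "t0 \<le> s" "s \<le> t"
    then show "norm (y t - x)^2 \<le> norm (y s - x)^2" by (intro h_mono) (use x in auto)
  qed simp
  then show ?thesis by blast
qed

lemma y_bounded: "t \<ge> t0 \<Longrightarrow> norm (y t) \<le> norm xs + norm (y t0 - xs)"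
proof -
  assume t: "t \<ge> t0"
  have "norm (y t - xs)^2 \<le> norm (y t0 - xs)^2" by (rule h_mono) (use xs_min t in auto)
  then have "norm (y t - xs) \<le> norm (y t0 - xs)" by (rule power2_le_imp_le) simp
  then show ?thesis using norm_triangle_ineq[of "y t - xs" xs] by simp
qed

lemma E_lim: "\<exists>T. \<forall>t\<ge>T. E t < \<epsilon>" if "\<epsilon> > 0"
proof -
  have "\<forall>\<^sub>F t in at_top. dist (E t * t powr \<beta>) 0 < \<epsilon>" using E_rate that by (rule tendstoD)
  then obtain T where T: "\<And>t. t \<ge> T \<Longrightarrow> \<bar>E t * t powr \<beta>\<bar> < \<epsilon>"
    unfolding eventually_at_top_linorder by (auto simp: dist_real_def)
  have "E t < \<epsilon>" if t: "t \<ge> max T 1" for t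
  proof -
    have "1 \<le> t powr \<beta>" by (rule ge_one_powr_ge_zero) (use t beta_pos in auto)
    then have "E t * 1 \<le> E t * t powr \<beta>" by (rule mult_left_mono) (rule E_nonneg)
    then show ?thesis using T[of t] t by simp
  qed
  then show ?thesis by blast
qed

lemma sublevel_convex: "convex {x. f x \<le> c}"
proof (rule convexI)
  fix a b :: 'a and s r :: real
  assume ab: "a \<in> {x. f x \<le> c}" "b \<in> {x. f x \<le> c}" and sr: "0 \<le> s" "0 \<le> r" "s + r = 1"
  have "f ((1 - r) *\<^sub>R a + r *\<^sub>R b) \<le> (1 - r) * f a + r * f b"
    by (rule convex_onD[OF f_convex]) (use sr in auto)
  also have "\<dots> \<le> (1 - r) * c + r * c"
    by (intro add_mono mult_left_mono) (use ab sr in auto)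
  finally have fc: "f ((1 - r) *\<^sub>R a + r *\<^sub>R b) \<le> c" by (simp add: algebra_simps)
  have eq: "s *\<^sub>R a + r *\<^sub>R b = (1 - r) *\<^sub>R a + r *\<^sub>R b" using sr by simp
  show "s *\<^sub>R a + r *\<^sub>R b \<in> {x. f x \<le> c}" unfolding eq using fc by blast
qed

lemma lim_point:
  assumes s: "\<And>n. s n \<ge> t0 + real n" and C: "closed C" "convex C" "\<And>n. y (s n) \<in> C"
  shows "\<exists>w\<in>Sm \<inter> C. \<forall>d ll. ((\<lambda>t. y t \<bullet> d) \<longlongrightarrow> ll) at_top \<longrightarrow> w \<bullet> d = ll"
proof -
  have sge: "s n \<ge> t0" for n using s[of n] by simp
  have "\<And>n. norm (y (s n)) \<le> norm xs + norm (y t0 - xs)" using y_bounded sge by blast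
  from cluster_point[of "\<lambda>n. y (s n)", OF this]
  obtain w where w: "\<And>D. closed D \<Longrightarrow> convex D \<Longrightarrow> (\<exists>N. \<forall>n\<ge>N. y (s n) \<in> D) \<Longrightarrow> w \<in> D" by blast
  have ev: "\<exists>N. \<forall>n\<ge>N. P (y (s n))" if "\<And>t. t \<ge> T \<Longrightarrow> P (y t)" for P T
  proof -
    obtain N :: nat where "T - t0 \<le> real N" using real_arch_simple by blast
    then have "\<forall>n\<ge>N. P (y (s n))" using s that by (smt (verit, best) of_nat_mono)
    then show ?thesis by blast
  qed
  have wC: "w \<in> C" by (rule w[OF C(1,2)]) (use C(3) in blast)
  have wS: "w \<in> Sm"
  proof -
    have "f w \<le> f xs + e" if e: "0 < e" for e
    proof -
      have "w \<in> {x. f x \<le> f xs + e}"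
      proof (rule w)
        show "closed {x. f x \<le> f xs + e}" by (rule closed_Collect_le[OF f_cont]) simp
        show "convex {x. f x \<le> f xs + e}" by (rule sublevel_convex)
        obtain T where T: "\<And>t. t \<ge> T \<Longrightarrow> E t < e" using E_lim[OF e] by blast
        show "\<exists>N. \<forall>n\<ge>N. y (s n) \<in> {x. f x \<le> f xs + e}"
        proof (rule ev[of T])
          fix t assume "T \<le> t"
          then have "E t < e" by (rule T)
          then show "y t \<in> {x. f x \<le> f xs + e}" by (simp add: E_def)
        qed
      qed
      then show ?thesis by simp
    qed
    then have "f w \<le> f xs" by (rule field_le_epsilon)
    then show ?thesis using xs_min by (auto intro: order_trans)
  qed
  have wl: "w \<bullet> d = ll" if lim: "((\<lambda>t. y t \<bullet> d) \<longlongrightarrow> ll) at_top" for d ll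
  proof -
    have "\<bar>w \<bullet> d - ll\<bar> \<le> e" if e: "0 < e" for e
    proof -
      have "\<forall>\<^sub>F t in at_top. dist (y t \<bullet> d) ll < e" using lim e by (rule tendstoD)
      then obtain T where T: "\<And>t. t \<ge> T \<Longrightarrow> \<bar>y t \<bullet> d - ll\<bar> < e"
        unfolding eventually_at_top_linorder by (auto simp: dist_real_def)
      have "w \<in> {x. d \<bullet> x \<le> ll + e} \<inter> {x. d \<bullet> x \<ge> ll - e}"
      proof (rule w)
        show "closed ({x. d \<bullet> x \<le> ll + e} \<inter> {x. d \<bullet> x \<ge> ll - e})"
          by (intro closed_Int closed_halfspace_le closed_halfspace_ge)
        show "convex ({x. d \<bullet> x \<le> ll + e} \<inter> {x. d \<bullet> x \<ge> ll - e})"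
          by (intro convex_Int convex_halfspace_le convex_halfspace_ge)
        show "\<exists>N. \<forall>n\<ge>N. y (s n) \<in> {x. d \<bullet> x \<le> ll + e} \<inter> {x. d \<bullet> x \<ge> ll - e}"
        proof (rule ev[of T])
          fix t assume "T \<le> t"
          then have "\<bar>y t \<bullet> d - ll\<bar> < e" by (rule T)
          then show "y t \<in> {x. d \<bullet> x \<le> ll + e} \<inter> {x. d \<bullet> x \<ge> ll - e}"
            by (simp add: inner_commute[of d] abs_less_iff)
        qed
      qed
      then show ?thesis by (auto simp: inner_commute abs_le_iff)
    qed
    then show ?thesis by (metis abs_le_zero_iff field_le_epsilon add.left_neutral eq_iff_diff_eq_0)
  qed
  show ?thesis using wC wS wl by blast
qed

lemma diff_conv:
  assumes "w1 \<in> Sm" "w2 \<in> Sm"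
  shows "\<exists>ll. ((\<lambda>t. y t \<bullet> (w2 - w1)) \<longlongrightarrow> ll) at_top"
proof -
  obtain L1 where L1: "((\<lambda>t. norm (y t - w1)^2) \<longlongrightarrow> L1) at_top" using fej[OF assms(1)] by blast
  obtain L2 where L2: "((\<lambda>t. norm (y t - w2)^2) \<longlongrightarrow> L2) at_top" using fej[OF assms(2)] by blast
  have eq2: "2 * (y t \<bullet> (w2 - w1)) = norm (y t - w1)^2 - norm (y t - w2)^2 - norm w1 ^2 + norm w2 ^2" for t
    by (simp add: power2_norm_eq_inner inner_diff_left inner_diff_right inner_commute algebra_simps)
  have eq: "y t \<bullet> (w2 - w1) = (norm (y t - w1)^2 - norm (y t - w2)^2 - norm w1 ^2 + norm w2 ^2) / 2" for t
    unfolding eq2[of t, symmetric] by simp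
  have "((\<lambda>t. (norm (y t - w1)^2 - norm (y t - w2)^2 - norm w1 ^2 + norm w2 ^2) / 2) \<longlongrightarrow>
      (L1 - L2 - norm w1 ^2 + norm w2 ^2) / 2) at_top"
    by (intro tendsto_intros L1 L2) simp_all
  then show ?thesis unfolding eq by blast
qed

definition P_lim where "P_lim w \<longleftrightarrow> (\<forall>d ll. ((\<lambda>t. y t \<bullet> d) \<longlongrightarrow> ll) at_top \<longrightarrow> w \<bullet> d = ll)"

lemma uniq:
  assumes w0: "w0 \<in> Sm" "P_lim w0"
    and s: "\<And>n. s n \<ge> t0 + real n" and C: "closed C" "convex C" "\<And>n. y (s n) \<in> C"
  shows "w0 \<in> C"
proof -
  obtain w' where w': "w' \<in> Sm" "w' \<in> C" "P_lim w'"
    using lim_point[OF s C] unfolding P_lim_def by blast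
  obtain ll where l: "((\<lambda>t. y t \<bullet> (w' - w0)) \<longlongrightarrow> ll) at_top" using diff_conv[OF w0(1) w'(1)] by blast
  have "w0 \<bullet> (w' - w0) = ll" "w' \<bullet> (w' - w0) = ll"
    using w0(2) w'(3) l unfolding P_lim_def by blast+
  then have "(w' - w0) \<bullet> (w' - w0) = 0" by (simp add: inner_diff_left)
  then have "w' = w0" by simp
  then show ?thesis using w'(2) by simp
qed

lemma weak_result: "\<exists>x\<in>{x. \<forall>z. f x \<le> f z}. weak_conv_at_top y x"
proof -
  obtain w0 where w0: "w0 \<in> Sm" "P_lim w0"
    using lim_point[of "\<lambda>n. t0 + real n" UNIV] unfolding P_lim_def by auto
  have "((\<lambda>t. y t \<bullet> v) \<longlongrightarrow> w0 \<bullet> v) at_top" for v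
  proof (rule ccontr)
    assume nl: "\<not> ((\<lambda>t. y t \<bullet> v) \<longlongrightarrow> w0 \<bullet> v) at_top"
    then obtain e where e: "0 < e" "\<not> (\<forall>\<^sub>F t in at_top. dist (y t \<bullet> v) (w0 \<bullet> v) < e)"
      unfolding tendsto_iff by blast
    then have freq: "\<forall>T. \<exists>t\<ge>T. \<bar>y t \<bullet> v - w0 \<bullet> v\<bar> \<ge> e"
      unfolding eventually_at_top_linorder dist_real_def by (meson not_le)
    have "(\<forall>T. \<exists>t\<ge>T. w0 \<bullet> v + e \<le> y t \<bullet> v) \<or> (\<forall>T. \<exists>t\<ge>T. y t \<bullet> v \<le> w0 \<bullet> v - e)"
    proof (rule ccontr)
      assume "\<not> ?thesis"
      then obtain T1 T2 where T1: "\<And>t. t \<ge> T1 \<Longrightarrow> y t \<bullet> v < w0 \<bullet> v + e"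
        and T2: "\<And>t. t \<ge> T2 \<Longrightarrow> w0 \<bullet> v - e < y t \<bullet> v" by (meson not_le)
      obtain t where t: "t \<ge> max T1 T2" "\<bar>y t \<bullet> v - w0 \<bullet> v\<bar> \<ge> e" using freq by blast
      then show False using T1[of t] T2[of t] by auto
    qed
    then show False
    proof
      assume A: "\<forall>T. \<exists>t\<ge>T. w0 \<bullet> v + e \<le> y t \<bullet> v"
      then have "\<forall>n::nat. \<exists>t. t \<ge> t0 + real n \<and> w0 \<bullet> v + e \<le> y t \<bullet> v" by blast
      from choice[OF this] obtain s where "\<forall>n. s n \<ge> t0 + real n \<and> w0 \<bullet> v + e \<le> y (s n) \<bullet> v" by blast
      then have s: "\<And>n. s n \<ge> t0 + real n" "\<And>n. w0 \<bullet> v + e \<le> y (s n) \<bullet> v" by auto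
      have "w0 \<in> {x. v \<bullet> x \<ge> w0 \<bullet> v + e}"
      proof (rule uniq[OF w0 s(1)])
        show "closed {x. v \<bullet> x \<ge> w0 \<bullet> v + e}" by (rule closed_halfspace_ge)
        show "convex {x. v \<bullet> x \<ge> w0 \<bullet> v + e}" by (rule convex_halfspace_ge)
        fix n show "y (s n) \<in> {x. v \<bullet> x \<ge> w0 \<bullet> v + e}" using s(2)[of n] by (simp add: inner_commute[of v])
      qed
      then show False using e(1) by (simp add: inner_commute)
    next
      assume A: "\<forall>T. \<exists>t\<ge>T. y t \<bullet> v \<le> w0 \<bullet> v - e"
      then have "\<forall>n::nat. \<exists>t. t \<ge> t0 + real n \<and> y t \<bullet> v \<le> w0 \<bullet> v - e" by blast
      from choice[OF this] obtain s where "\<forall>n. s n \<ge> t0 + real n \<and> y (s n) \<bullet> v \<le> w0 \<bullet> v - e" by blast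
      then have s: "\<And>n. s n \<ge> t0 + real n" "\<And>n. y (s n) \<bullet> v \<le> w0 \<bullet> v - e" by auto
      have "w0 \<in> {x. v \<bullet> x \<le> w0 \<bullet> v - e}"
      proof (rule uniq[OF w0 s(1)])
        show "closed {x. v \<bullet> x \<le> w0 \<bullet> v - e}" by (rule closed_halfspace_le)
        show "convex {x. v \<bullet> x \<le> w0 \<bullet> v - e}" by (rule convex_halfspace_le)
        fix n show "y (s n) \<in> {x. v \<bullet> x \<le> w0 \<bullet> v - e}" using s(2)[of n] by (simp add: inner_commute[of v])
      qed
      then show False using e(1) by (simp add: inner_commute)
    qed
  qed
  then show ?thesis using w0(1) unfolding weak_conv_at_top_def by blast
qed

end

theorem mainTheorem3:
  fixes f :: "'a::{real_inner, complete_space} \<Rightarrow> real"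
    and gradf :: "'a \<Rightarrow> 'a"
    and y y' :: "real \<Rightarrow> 'a"
    and lam :: "real \<Rightarrow> real"
    and t0 q p :: real
  assumes f_convex: "convex_on UNIV f"
    and f_grad: "\<And>x. (f has_derivative (\<lambda>h. gradf x \<bullet> h)) (at x)"
    and grad_cont: "continuous_on UNIV gradf"
    and S_nonempty: "{x. \<forall>z. f x \<le> f z} \<noteq> {}"
    and grad_lip: "\<And>B. bounded B \<Longrightarrow> \<exists>L. L-lipschitz_on B gradf"
    and t0_pos: "t0 > 0" and q_pos: "q > 0" and p_ge: "p \<ge> 1"
    and y_deriv: "\<And>t. t \<ge> t0 \<Longrightarrow> (y has_vector_derivative y' t) (at t within {t0..})"
    and y'_cont: "continuous_on {t0..} y'"
    and lam_cont: "continuous_on {t0..} lam"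
    and lam_pos: "\<And>t. t \<ge> t0 \<Longrightarrow> lam t > 0"
    and ode: "\<And>t. t \<ge> t0 \<Longrightarrow>
       y' t + vector_derivative (tau_fun t0 q lam) (at t within {t0..}) *\<^sub>R gradf (y t) = 0"
    and closed_loop: "\<And>t. t \<ge> t0 \<Longrightarrow> lam t powr p * rpow (norm (y' t)) (p - 1) = 1"
  shows "((\<lambda>t. f (y t) - (INF x. f x)) \<in> o[at_top](\<lambda>t. t powr (-(1 + q - 1 / p)))) \<and>
         ((\<lambda>t. norm (gradf (y t))) \<in> o[at_top](\<lambda>t. t powr (-(1 + q - 1 / p)))) \<and>
         ((\<lambda>t. t powr (1 + 1 / q - 1 / (p * q)) * norm (y' t) powr (2 + (p - 1) / (p * q)))
           integrable_on {t0..}) \<and>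
         (\<exists>x\<in>{x. \<forall>z. f x \<le> f z}. weak_conv_at_top y x)"
proof -
  interpret D: dyn f gradf y y' lam t0 q p
    by unfold_locales (use f_convex f_grad grad_cont S_nonempty grad_lip t0_pos q_pos p_ge y_deriv y'_cont
        lam_cont lam_pos ode closed_loop in auto)
  have bet: "D.\<beta> = 1 + q - 1 / p" unfolding D.\<beta>_def ..
  have pm: "\<And>t::real. t powr (-(1 + q - 1 / p)) = inverse (t powr (1 + q - 1 / p))" by (rule powr_minus)
  have evpos: "\<forall>\<^sub>F t in at_top. (t::real) > 0" by (rule eventually_gt_at_top)
  have r1: "(\<lambda>t. f (y t) - (INF x. f x)) \<in> o[at_top](\<lambda>t. t powr (-(1 + q - 1 / p)))"
  proof (rule smalloI_tendsto)
    show "((\<lambda>t. (f (y t) - (INF x. f x)) / t powr (-(1 + q - 1 / p))) \<longlongrightarrow> 0) at_top"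
    proof (rule Lim_transform_eventually[OF D.E_rate])
      show "\<forall>\<^sub>F t in at_top. D.E t * t powr D.\<beta> = (f (y t) - (INF x. f x)) / t powr (-(1 + q - 1 / p))"
        using evpos by eventually_elim (unfold pm, simp add: D.E_def D.fstar bet divide_inverse)
    qed
    show "\<forall>\<^sub>F t in at_top. t powr (-(1 + q - 1 / p)) \<noteq> 0"
      using evpos by eventually_elim simp
  qed
  have r2: "(\<lambda>t. norm (gradf (y t))) \<in> o[at_top](\<lambda>t. t powr (-(1 + q - 1 / p)))"
  proof (rule smalloI_tendsto)
    show "((\<lambda>t. norm (gradf (y t)) / t powr (-(1 + q - 1 / p))) \<longlongrightarrow> 0) at_top"
    proof (rule Lim_transform_eventually[OF D.u_rate])
      show "\<forall>\<^sub>F t in at_top. norm (gradf (y t)) * t powr D.\<beta> = norm (gradf (y t)) / t powr (-(1 + q - 1 / p))"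
        using evpos by eventually_elim (unfold pm, simp add: bet divide_inverse)
    qed
    show "\<forall>\<^sub>F t in at_top. t powr (-(1 + q - 1 / p)) \<noteq> 0"
      using evpos by eventually_elim simp
  qed
  show ?thesis using r1 r2 D.integrable_result D.weak_result by blast
qed

end
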